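(* Let $\Upsilon$ be a measurable space, $d\ge 2$, $\Omega=\Upsilon^{\mathbb{Z}^d}$ with the product $\sigma$-algebra $\mathcal F$, and let $P$ be a probability measure on $(\Omega,\mathcal F)$ invariant under all shifts $\vartheta_v$, $v\in\mathbb{Z}^d$, where $\vartheta_v(\omega)(j)=\omega(j+v)$. Assume $P$ is tail-trivial. Let $v_1,v_2\in\mathbb{Z}^d$ be linearly independent and define the 2-parameter group $\theta_k=\vartheta_{v_1}^{k^{(1)}}\circ\vartheta_{v_2}^{k^{(2)}}$ for $k=(k^{(1)},k^{(2)})\in\mathbb{Z}^2$. Let $(M,\mathcal B,\mu)$ be a probability space, $\tau:M\to M$ a $\mu$-preserving measurable transformation, $\kappa:M\to\mathbb{Z}^2$ measurable, $\kappa_n=\sum_{i=0}^{n-1}\kappa\circ\tau^i$, and $S(t,\omega)=(\tau(t),\theta_{\kappa(t)}\omega)$ on $M\times\Omega$ with product measure $\bar P=\mu\otimes P$. Assume that $\|\kappa_n(t)\|\to\infty$ as $n\to\infty$ for $\mu$-almost all $t\in M$. Then if $\tau$ is ergodic (resp. weakly mixing, resp. strongly mixing) with respect to $\mu$, $S$ is ergodic (resp. weakly mixing, resp. strongly mixing) with respect to $\bar P$.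
   Context: $\|\cdot\|$ denotes the maximum norm. For $J\subseteq\mathbb{Z}^d$, $\mathcal F_J$ is the $\sigma$-algebra generated by the projections $\omega\mapsto\omega(j)$, $j\in J$. The tail field is $\mathcal T=\bigcap_{V\subset\mathbb{Z}^d\text{ finite}}\mathcal F_{\mathbb{Z}^d\setminus V}$, and $P$ is tail-trivial if $P(A)\in\{0,1\}$ for all $A\in\mathcal T$. *)

theory Defs
  imports "HOL-Probability.Probability"
begin

definition mpt :: "'a measure \<Rightarrow> ('a \<Rightarrow> 'a) \<Rightarrow> bool" where
  "mpt M T \<longleftrightarrow> T \<in> measurable M M \<and>
     (\<forall>A\<in>sets M. emeasure M (T -` A \<inter> space M) = emeasure M A)"

definition ergodic :: "'a measure \<Rightarrow> ('a \<Rightarrow> 'a) \<Rightarrow> bool" where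
  "ergodic M T \<longleftrightarrow> mpt M T \<and>
     (\<forall>A\<in>sets M. T -` A \<inter> space M = A \<longrightarrow> measure M A = 0 \<or> measure M A = 1)"

definition weakly_mixing :: "'a measure \<Rightarrow> ('a \<Rightarrow> 'a) \<Rightarrow> bool" where
  "weakly_mixing M T \<longleftrightarrow> mpt M T \<and>
     (\<forall>A\<in>sets M. \<forall>B\<in>sets M.
        (\<lambda>n. (\<Sum>k<n. \<bar>measure M ((T ^^ k) -` A \<inter> space M \<inter> B) - measure M A * measure M B\<bar>) / real n)
          \<longlonglongrightarrow> 0)"

definition strongly_mixing :: "'a measure \<Rightarrow> ('a \<Rightarrow> 'a) \<Rightarrow> bool" where
  "strongly_mixing M T \<longleftrightarrow> mpt M T \<and>
     (\<forall>A\<in>sets M. \<forall>B\<in>sets M.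
        (\<lambda>n. measure M ((T ^^ n) -` A \<inter> space M \<inter> B)) \<longlonglongrightarrow> measure M A * measure M B)"

definition config_space :: "'u measure \<Rightarrow> ((int ^ 'd) \<Rightarrow> 'u) measure" where
  "config_space Y = Pi\<^sub>M UNIV (\<lambda>_. Y)"

definition shift :: "int ^ 'd \<Rightarrow> ((int ^ 'd) \<Rightarrow> 'u) \<Rightarrow> ((int ^ 'd) \<Rightarrow> 'u)" where
  "shift v \<omega> = (\<lambda>j. \<omega> (j + v))"

text \<open>\<theta>_k = \<vartheta>_{v1}^{k1} \<circ> \<vartheta>_{v2}^{k2}; an integer power of a shift is \<vartheta>_v^m = \<vartheta>_{m v}.\<close>
definition theta :: "int ^ 'd \<Rightarrow> int ^ 'd \<Rightarrow> int \<times> int \<Rightarrow> ((int ^ 'd) \<Rightarrow> 'u) \<Rightarrow> ((int ^ 'd) \<Rightarrow> 'u)" where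
  "theta v1 v2 k = shift (fst k *s v1) \<circ> shift (snd k *s v2)"

definition sigma_coords :: "'u measure \<Rightarrow> (int ^ 'd) set \<Rightarrow> ((int ^ 'd) \<Rightarrow> 'u) set set" where
  "sigma_coords Y J = sigma_sets (space (config_space Y))
      (\<Union>j\<in>J. {(\<lambda>\<omega>. \<omega> j) -` A \<inter> space (config_space Y) | A. A \<in> sets Y})"

definition tail_field :: "'u measure \<Rightarrow> ((int ^ 'd) \<Rightarrow> 'u) set set" where
  "tail_field Y = (\<Inter>V\<in>{V. finite V}. sigma_coords Y (UNIV - V))"

definition tail_trivial :: "'u measure \<Rightarrow> ((int ^ 'd) \<Rightarrow> 'u) measure \<Rightarrow> bool" where
  "tail_trivial Y P \<longleftrightarrow> (\<forall>A\<in>tail_field Y. measure P A = 0 \<or> measure P A = 1)"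

text \<open>Linear independence of two integer vectors (over Z, equivalently over Q or R).\<close>
definition lin_indep2 :: "int ^ 'd \<Rightarrow> int ^ 'd \<Rightarrow> bool" where
  "lin_indep2 v1 v2 \<longleftrightarrow> (\<forall>a b :: int. a *s v1 + b *s v2 = 0 \<longrightarrow> a = 0 \<and> b = 0)"

definition maxnorm2 :: "int \<times> int \<Rightarrow> int" where
  "maxnorm2 k = max \<bar>fst k\<bar> \<bar>snd k\<bar>"

definition cocycle_sum :: "('a \<Rightarrow> 'a) \<Rightarrow> ('a \<Rightarrow> int \<times> int) \<Rightarrow> nat \<Rightarrow> 'a \<Rightarrow> int \<times> int" where
  "cocycle_sum \<tau> \<kappa> n t = (\<Sum>i<n. \<kappa> ((\<tau> ^^ i) t))"

definition skew :: "int ^ 'd \<Rightarrow> int ^ 'd \<Rightarrow> ('a \<Rightarrow> 'a) \<Rightarrow> ('a \<Rightarrow> int \<times> int)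
    \<Rightarrow> 'a \<times> ((int ^ 'd) \<Rightarrow> 'u) \<Rightarrow> 'a \<times> ((int ^ 'd) \<Rightarrow> 'u)" where
  "skew v1 v2 \<tau> \<kappa> = (\<lambda>(t, \<omega>). (\<tau> t, theta v1 v2 (\<kappa> t) \<omega>))"

end

theory Submission
  imports Defs
begin

lemma L1_le_L2:
  fixes h :: "'x \<Rightarrow> real"
  assumes P: "prob_space P" and hi: "integrable P h" and h2: "integrable P (\<lambda>x. (h x)^2)"
  shows "(\<integral>x. \<bar>h x\<bar> \<partial>P)^2 \<le> (\<integral>x. (h x)^2 \<partial>P)"
proof -
  interpret prob_space P by fact
  define c where "c = (\<integral>x. \<bar>h x\<bar> \<partial>P)"
  have ai: "integrable P (\<lambda>x. \<bar>h x\<bar>)" using hi by auto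
  have eq: "\<And>x. (\<bar>h x\<bar> - c)^2 = (h x)^2 - 2*c*\<bar>h x\<bar> + c^2"
    by (simp add: power2_eq_square algebra_simps)
  have "0 \<le> (\<integral>x. (\<bar>h x\<bar> - c)^2 \<partial>P)" by simp
  also have "\<dots> = (\<integral>x. (h x)^2 - 2*c*\<bar>h x\<bar> + c^2 \<partial>P)" by (simp only: eq)
  also have "\<dots> = (\<integral>x. (h x)^2 \<partial>P) - 2*c*c + c^2"
    using ai h2 by (simp add: c_def prob_space)
  finally show ?thesis by (simp add: c_def power2_eq_square)
qed


lemma backward_decoupling:
  fixes f :: "'x \<Rightarrow> real" and G :: "nat \<Rightarrow> 'x measure"
  assumes P: "prob_space P"
    and sub: "\<And>n. subalgebra P (G n)"
    and dec: "\<And>n. sets (G (Suc n)) \<subseteq> sets (G n)"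
    and fm: "f \<in> borel_measurable P" and fb: "\<And>x. \<bar>f x\<bar> \<le> 1"
    and orth: "\<And>h. (\<And>n. h \<in> borel_measurable (G n)) \<Longrightarrow> (\<And>x. \<bar>h x\<bar> \<le> 1) \<Longrightarrow> (\<integral>x. f x * h x \<partial>P) = 0"
    and e: "\<epsilon> > 0"
  shows "\<exists>N. \<forall>E\<in>sets (G N). \<bar>\<integral>x. f x * indicator E x \<partial>P\<bar> < \<epsilon>"
proof -
  interpret prob_space P by fact
  have sfs: "\<And>n. sigma_finite_subalgebra P (G n)"
    unfolding sigma_finite_subalgebra_def
    using sub finite_measure_restr_to_subalg finite_measure_axioms finite_measure_def by blast
  have decle: "\<And>n m. n \<le> m \<Longrightarrow> sets (G m) \<subseteq> sets (G n)"
    using dec by (rule lift_Suc_antimono_le[of "\<lambda>n. sets (G n)"])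
  have subGG: "\<And>n m. n \<le> m \<Longrightarrow> subalgebra (G n) (G m)"
    using sub decle by (simp add: subalgebra_def)
  have fi: "integrable P f"
    by (rule integrable_const_bound[where B=1]) (use fb fm in auto)
  define g where "g n = real_cond_exp P (G n) f" for n
  have gG: "g n \<in> borel_measurable (G n)" for n
    using sigma_finite_subalgebra.real_cond_exp_F_meas[OF sfs] g_def by simp
  have gGm: "g m \<in> borel_measurable (G n)" if "n \<le> m" for n m
    using measurable_from_subalg[OF subGG[OF that] gG] .
  have gP: "g n \<in> borel_measurable P" for n
    using measurable_from_subalg[OF sub gG] .
  have gb: "AE x in P. \<bar>g n x\<bar> \<le> 1" for n
  proof -
    have "AE x in P. g n x \<le> 1"
      unfolding g_def by (rule sigma_finite_subalgebra.real_cond_exp_le_c[OF sfs fi]) (use fb abs_le_D1 in auto)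
    moreover have "AE x in P. -1 \<le> g n x"
      unfolding g_def by (rule sigma_finite_subalgebra.real_cond_exp_ge_c[OF sfs fi]) (use fb in \<open>auto simp: abs_le_iff\<close>)
    ultimately show ?thesis by eventually_elim auto
  qed
  have gbA: "AE x in P. \<forall>n. \<bar>g n x\<bar> \<le> 1"
    using gb by (simp add: AE_all_countable)
  have gi: "integrable P (g n)" for n
    by (rule integrable_const_bound[where B=1]) (use gb gP in auto)
  have prodint: "integrable P (\<lambda>x. u x * v x)"
    if "u \<in> borel_measurable P" "v \<in> borel_measurable P" "AE x in P. \<bar>u x\<bar> \<le> 1" "AE x in P. \<bar>v x\<bar> \<le> 1" for u v :: "'x \<Rightarrow> real"
  proof (rule integrable_const_bound[where f="\<lambda>x. u x * v x" and B=1])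
    show "AE x in P. norm (u x * v x) \<le> 1" using that(3,4)
    proof eventually_elim
      case (elim x)
      have "\<bar>u x\<bar> * \<bar>v x\<bar> \<le> 1" by (rule mult_le_one) (use elim in auto)
      then show ?case by (simp add: abs_mult)
    qed
  qed (use that in auto)
  have fbA: "AE x in P. \<bar>f x\<bar> \<le> 1" using fb by simp
  have key: "(\<integral>x. g m x * g n x \<partial>P) = (\<integral>x. g m x * f x \<partial>P)" if "n \<le> m" for n m
    unfolding g_def[of n]
    by (rule sigma_finite_subalgebra.real_cond_exp_intg(2)[OF sfs])
       (use prodint[OF gP fm gb fbA] gGm[OF that] fm in auto)
  define a where "a n = (\<integral>x. g n x * f x \<partial>P)" for n
  have a_sq: "a n = (\<integral>x. g n x * g n x \<partial>P)" for n
    using key[of n n] a_def by simp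
  have diff: "(\<integral>x. (g n x - g m x)^2 \<partial>P) = a n - a m" if "n \<le> m" for n m
  proof -
    have eq: "\<And>x. (g n x - g m x)^2 = g n x * g n x - 2 * (g m x * g n x) + g m x * g m x"
      by (simp add: power2_eq_square algebra_simps)
    have i1: "integrable P (\<lambda>x. g n x * g n x)" by (rule prodint) (use gP gb in auto)
    have i2: "integrable P (\<lambda>x. g m x * g n x)" by (rule prodint) (use gP gb in auto)
    have i3: "integrable P (\<lambda>x. g m x * g m x)" by (rule prodint) (use gP gb in auto)
    have "(\<integral>x. (g n x - g m x)^2 \<partial>P) = (\<integral>x. g n x * g n x - 2 * (g m x * g n x) + g m x * g m x \<partial>P)"
      by (simp only: eq)
    also have "\<dots> = (\<integral>x. g n x * g n x \<partial>P) - 2 * (\<integral>x. g m x * g n x \<partial>P) + (\<integral>x. g m x * g m x \<partial>P)"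
      using i1 i2 i3 by simp
    also have "\<dots> = a n - 2 * a m + a m"
      using key[OF that] a_sq a_def by simp
    finally show ?thesis by simp
  qed
  have a_nonneg: "0 \<le> a n" for n using a_sq[of n] by simp
  have a_anti: "a m \<le> a n" if "n \<le> m" for n m
  proof -
    have "0 \<le> (\<integral>x. (g n x - g m x)^2 \<partial>P)" by simp
    then show ?thesis using diff[OF that] by simp
  qed
  have a_conv: "a \<longlonglongrightarrow> Inf (range a)"
    by (rule LIMSEQ_decseq_INF) (use a_nonneg a_anti in \<open>auto simp: bdd_below_def antimono_def\<close>)
  have aC: "Cauchy a" using a_conv by (rule LIMSEQ_imp_Cauchy)
  have L1d: "(\<integral>x. \<bar>g i x - g j x\<bar> \<partial>P)^2 \<le> \<bar>a i - a j\<bar>" for i j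
  proof -
    have sq: "integrable P (\<lambda>x. (g i x - g j x)^2)"
    proof -
      have "integrable P (\<lambda>x. (g i x - g j x) * (g i x - g j x))"
      proof (rule integrable_const_bound[where f="\<lambda>x. (g i x - g j x) * (g i x - g j x)" and B=4])
        show "AE x in P. norm ((g i x - g j x) * (g i x - g j x)) \<le> 4"
          using gb[of i] gb[of j]
        proof eventually_elim
          case (elim x)
          have "\<bar>g i x - g j x\<bar> \<le> 2" using elim by linarith
          then have "\<bar>g i x - g j x\<bar> * \<bar>g i x - g j x\<bar> \<le> 2 * 2"
            by (intro mult_mono) auto
          then show ?case by (simp add: abs_mult)
        qed
      qed (use gP in auto)
      then show ?thesis by (simp add: power2_eq_square)
    qed
    have le: "(\<integral>x. \<bar>g i x - g j x\<bar> \<partial>P)^2 \<le> (\<integral>x. (g i x - g j x)^2 \<partial>P)"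
      by (rule L1_le_L2[OF P]) (use gi sq in auto)
    show ?thesis
    proof (cases "i \<le> j")
      case True
      then show ?thesis using le diff[OF True] by simp
    next
      case False
      then have "j \<le> i" by simp
      have "(\<integral>x. (g i x - g j x)^2 \<partial>P) = (\<integral>x. (g j x - g i x)^2 \<partial>P)"
        by (simp add: power2_commute)
      then show ?thesis using le diff[OF \<open>j \<le> i\<close>] by simp
    qed
  qed
  obtain r where r: "strict_mono r" and rC: "AE x in P. Cauchy (\<lambda>i. g (r i) x)"
  proof (rule cauchy_L1_AE_cauchy_subseq[of P g])
    show "integrable P (g n)" for n by (rule gi)
    fix e :: real assume "0 < e"
    then have "0 < e^2" by simp
    from aC[unfolded Cauchy_def, rule_format, OF this] obtain N where
      N: "\<And>m n. m \<ge> N \<Longrightarrow> n \<ge> N \<Longrightarrow> dist (a m) (a n) < e^2" by blast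
    show "\<exists>N. \<forall>i\<ge>N. \<forall>j\<ge>N. (\<integral>x. norm (g i x - g j x) \<partial>P) < e"
    proof (intro exI allI impI)
      fix i j assume "N \<le> i" "N \<le> j"
      then have "(\<integral>x. \<bar>g i x - g j x\<bar> \<partial>P)^2 < e^2"
        using L1d[of i j] N[of i j] by (simp add: dist_real_def)
      then have "(\<integral>x. \<bar>g i x - g j x\<bar> \<partial>P) < e"
        using \<open>0 < e\<close> by (simp add: power_less_imp_less_base)
      then show "(\<integral>x. norm (g i x - g j x) \<partial>P) < e" by simp
    qed
  qed auto
  define gl where "gl x = lim (\<lambda>i. g (r i) x)" for x
  define gh where "gh x = max (-1) (min 1 (gl x))" for x
  have glG: "gl \<in> borel_measurable (G n)" for n
  proof -
    have eq: "gl x = lim (\<lambda>i. g (r (i + n)) x)" for x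
    proof -
      have "(\<lambda>i. g (r (i + n)) x) \<longlonglongrightarrow> L \<longleftrightarrow> (\<lambda>i. g (r i) x) \<longlonglongrightarrow> L" for L
      proof
        assume "(\<lambda>i. g (r (i + n)) x) \<longlonglongrightarrow> L"
        then show "(\<lambda>i. g (r i) x) \<longlonglongrightarrow> L" by (rule LIMSEQ_offset)
      next
        assume "(\<lambda>i. g (r i) x) \<longlonglongrightarrow> L"
        then show "(\<lambda>i. g (r (i + n)) x) \<longlonglongrightarrow> L" by (rule LIMSEQ_ignore_initial_segment)
      qed
      then show ?thesis unfolding gl_def lim_def by simp
    qed
    have "(\<lambda>x. lim (\<lambda>i. g (r (i + n)) x)) \<in> borel_measurable (G n)"
    proof (rule borel_measurable_lim_metric[of "\<lambda>i. g (r (i + n))"])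
      fix i
      have "n \<le> r (i + n)" using seq_suble[OF r, of "i+n"] by simp
      then show "g (r (i + n)) \<in> borel_measurable (G n)" by (rule gGm)
    qed
    moreover have "gl = (\<lambda>x. lim (\<lambda>i. g (r (i + n)) x))" using eq by (rule ext)
    ultimately show ?thesis by simp
  qed
  have ghG: "gh \<in> borel_measurable (G n)" for n
    unfolding gh_def using glG[of n] by measurable
  have ghP: "gh \<in> borel_measurable P" using measurable_from_subalg[OF sub ghG] .
  have ghb: "\<bar>gh x\<bar> \<le> 1" for x by (simp add: gh_def)
  have ghconv: "AE x in P. (\<lambda>i. g (r i) x) \<longlonglongrightarrow> gh x"
    using rC gbA
  proof eventually_elim
    case (elim x)
    have c: "(\<lambda>i. g (r i) x) \<longlonglongrightarrow> gl x"
    proof -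
      have "convergent (\<lambda>i. g (r i) x)" using elim by (intro Cauchy_convergent) auto
      then show ?thesis unfolding gl_def by (simp add: convergent_LIMSEQ_iff)
    qed
    have "\<bar>gl x\<bar> \<le> 1"
    proof (rule tendsto_upperbound)
      show "(\<lambda>i. \<bar>g (r i) x\<bar>) \<longlonglongrightarrow> \<bar>gl x\<bar>" using c by (rule tendsto_rabs)
      show "\<forall>\<^sub>F i in sequentially. \<bar>g (r i) x\<bar> \<le> 1" using elim by simp
    qed simp
    then have "gh x = gl x" by (simp add: gh_def)
    then show ?case using c by simp
  qed
  have lim1: "(\<lambda>i. \<integral>x. f x * g (r i) x \<partial>P) \<longlonglongrightarrow> (\<integral>x. f x * gh x \<partial>P)"
  proof (rule integral_dominated_convergence[where w="\<lambda>_. 1"])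
    show "AE x in P. (\<lambda>i. f x * g (r i) x) \<longlonglongrightarrow> f x * gh x"
      using ghconv by eventually_elim (rule tendsto_mult_left)
    show "AE x in P. norm (f x * g (r i) x) \<le> 1" for i
      using gb[of "r i"]
    proof eventually_elim
      case (elim x)
      have "\<bar>f x\<bar> * \<bar>g (r i) x\<bar> \<le> 1" by (rule mult_le_one) (use elim fb in auto)
      then show ?case by (simp add: abs_mult)
    qed
  qed (use fm gP ghP in auto)
  have "(\<integral>x. f x * gh x \<partial>P) = 0" by (rule orth[OF ghG ghb])
  then have "(\<lambda>i. a (r i)) \<longlonglongrightarrow> 0"
    using lim1 by (simp add: a_def mult.commute)
  moreover have "(\<lambda>i. a (r i)) \<longlonglongrightarrow> Inf (range a)"
    using LIMSEQ_subseq_LIMSEQ[OF a_conv r] by (simp add: comp_def)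
  ultimately have "Inf (range a) = 0" using LIMSEQ_unique by blast
  then have a0: "a \<longlonglongrightarrow> 0" using a_conv by simp
  have "0 < \<epsilon>^2" using e by simp
  from order_tendstoD(2)[OF a0 this] obtain N where N: "a N < \<epsilon>^2"
    by (auto simp: eventually_sequentially)
  show ?thesis
  proof (intro exI ballI)
    fix E assume E: "E \<in> sets (G N)"
    have EP: "E \<in> sets P" using sub E by (auto simp: subalgebra_def)
    have "(\<integral>x. f x * indicator E x \<partial>P) = (\<integral>x. indicator E x * g N x \<partial>P)"
      unfolding g_def
    proof (subst sigma_finite_subalgebra.real_cond_exp_intg(2)[OF sfs])
      show "integrable P (\<lambda>x. indicator E x * f x)"
        by (rule prodint) (use EP fm fb in auto)
    qed (use E fm in \<open>auto simp: mult.commute\<close>)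
    also have "\<bar>\<dots>\<bar> \<le> (\<integral>x. \<bar>indicator E x * g N x\<bar> \<partial>P)"
      by (rule integral_abs_bound)
    also have "\<dots> \<le> (\<integral>x. \<bar>g N x\<bar> \<partial>P)"
    proof (rule integral_mono)
      show "integrable P (\<lambda>x. \<bar>indicator E x * g N x\<bar>)"
        using prodint[of "indicator E" "g N"] EP gP gb by auto
    qed (use gi in \<open>auto simp: abs_mult indicator_def\<close>)
    also have "\<dots> < \<epsilon>"
    proof -
      have "(\<integral>x. \<bar>g N x\<bar> \<partial>P)^2 \<le> a N"
        using L1_le_L2[OF P gi, of N] a_sq[of N] prodint[OF gP gP gb gb]
        by (simp add: power2_eq_square)
      then have "(\<integral>x. \<bar>g N x\<bar> \<partial>P)^2 < \<epsilon>^2" using N by simp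
      then show ?thesis using e by (simp add: power_less_imp_less_base)
    qed
    finally show "\<bar>\<integral>x. f x * indicator E x \<partial>P\<bar> < \<epsilon>" .
  qed
qed


definition box :: "nat \<Rightarrow> (int ^ 'd) set" where
  "box n = {w. \<forall>i. \<bar>w $ i\<bar> \<le> int n}"

lemma finite_box: "finite (box n)"
proof -
  have "box n \<subseteq> (\<lambda>f. vec_lambda f) ` (PiE UNIV (\<lambda>_. {-int n..int n}))"
  proof
    fix w :: "int ^ 'd" assume "w \<in> box n"
    then have "(\<lambda>i. w $ i) \<in> PiE UNIV (\<lambda>_. {-int n..int n})"
      by (auto simp: box_def abs_le_iff minus_le_iff)
    moreover have "w = vec_lambda (\<lambda>i. w $ i)" by simp
    ultimately show "w \<in> (\<lambda>f. vec_lambda f) ` (PiE UNIV (\<lambda>_. {-int n..int n}))" by blast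
  qed
  moreover have "finite (PiE (UNIV::'d::finite set) (\<lambda>_. {-int n..int n}))"
    by (rule finite_PiE) auto
  ultimately show ?thesis by (metis finite_imageI finite_subset)
qed

lemma box_mono: "n \<le> m \<Longrightarrow> box n \<subseteq> box m"
  by (auto simp: box_def) (meson dual_order.trans of_nat_mono)

lemma box_cover: "finite V \<Longrightarrow> \<exists>n. V \<subseteq> box n"
proof (induction V rule: finite_induct)
  case empty then show ?case by auto
next
  case (insert v V)
  then obtain n where n: "V \<subseteq> box n" by blast
  define m where "m = Max (range (\<lambda>i. nat \<bar>v $ i\<bar>))"
  have "\<bar>v $ i\<bar> \<le> int m" for i
  proof -
    have "nat \<bar>v $ i\<bar> \<le> m" unfolding m_def by (rule Max_ge) auto
    then show ?thesis by linarith
  qed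
  then have "v \<in> box m" by (simp add: box_def)
  then have "insert v V \<subseteq> box (max n m)"
    using n box_mono[of n "max n m"] box_mono[of m "max n m"] by auto
  then show ?case by blast
qed

definition gen :: "'u measure \<Rightarrow> (int ^ 'd) set \<Rightarrow> ((int ^ 'd) \<Rightarrow> 'u) set set" where
  "gen Y J = (\<Union>j\<in>J. {(\<lambda>\<omega>. \<omega> j) -` A \<inter> space (config_space Y) | A. A \<in> sets Y})"

lemma gen_mono: "J \<subseteq> K \<Longrightarrow> gen Y J \<subseteq> gen Y K"
  unfolding gen_def by auto

lemma sc_mono: "J \<subseteq> K \<Longrightarrow> sigma_coords Y J \<subseteq> sigma_coords Y K"
  unfolding sigma_coords_def gen_def[symmetric] by (intro sigma_sets_mono' gen_mono)

lemma gen_config: "gen Y J \<subseteq> sets (config_space Y)"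
proof
  fix X assume "X \<in> gen Y J"
  then obtain j A where X: "X = (\<lambda>\<omega>. \<omega> j) -` A \<inter> space (config_space Y)" and A: "A \<in> sets Y"
    unfolding gen_def by auto
  have "(\<lambda>\<omega>. \<omega> j) \<in> measurable (config_space Y) Y"
    unfolding config_space_def by (rule measurable_component_singleton) simp
  then show "X \<in> sets (config_space Y)" using X A by (simp add: measurable_sets)
qed

locale tailset =
  fixes Y :: "'u measure" and P :: "((int ^ 'd) \<Rightarrow> 'u) measure"
  assumes P_sets: "sets P = sets (config_space Y :: ((int ^ 'd) \<Rightarrow> 'u) measure)"
    and P_prob: "prob_space P"
    and P_shift: "\<And>v. mpt P (shift v)"
    and P_tail: "tail_trivial Y P"
begin

sublocale prob_space P by (rule P_prob)

lemma space_P: "space P = space (config_space Y)"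
  by (rule sets_eq_imp_space_eq[OF P_sets])

lemma gen_sets: "gen Y J \<subseteq> sets P"
  using gen_config P_sets by auto

lemma gen_pow: "gen Y J \<subseteq> Pow (space P)"
  using gen_sets sets.sets_into_space by blast

lemma sc_eq: "sigma_coords Y J = sigma_sets (space P) (gen Y J)"
  by (simp add: sigma_coords_def gen_def space_P)

lemma sc_sets: "sigma_coords Y J \<subseteq> sets P"
  unfolding sc_eq by (rule sets.sigma_sets_subset[OF gen_sets])

definition Gm :: "(int ^ 'd) set \<Rightarrow> ((int ^ 'd) \<Rightarrow> 'u) measure" where
  "Gm J = sigma (space P) (gen Y J)"

lemma sets_Gm: "sets (Gm J) = sigma_coords Y J"
  unfolding Gm_def sc_eq by (rule sets_measure_of[OF gen_pow])

lemma space_Gm: "space (Gm J) = space P"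
  unfolding Gm_def by (simp add: space_measure_of_conv)

lemma sub_Gm: "subalgebra P (Gm J)"
  unfolding subalgebra_def using sets_Gm space_Gm sc_sets by auto

lemma tail_mem:
  assumes "\<And>n. T \<in> sigma_coords Y (UNIV - (box n :: (int ^ 'd) set))"
  shows "T \<in> tail_field Y"
  unfolding tail_field_def
proof
  fix V :: "(int ^ 'd) set" assume "V \<in> {V. finite V}"
  then obtain n where "V \<subseteq> box n" using box_cover by auto
  then have "sigma_coords Y (UNIV - box n) \<subseteq> sigma_coords Y (UNIV - V)"
    by (intro sc_mono) auto
  then show "T \<in> sigma_coords Y (UNIV - V)" using assms by auto
qed

lemma decouple:
  assumes D: "D \<in> sets P" and e: "\<epsilon> > 0"
  shows "\<exists>n. \<forall>E\<in>sigma_coords Y (UNIV - box n). \<bar>measure P (D \<inter> E) - measure P D * measure P E\<bar> < \<epsilon>"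
proof -
  define f where "f x = indicator D x - measure P D" for x
  define G where "G n = Gm (UNIV - box n)" for n
  have sub: "subalgebra P (G n)" for n unfolding G_def by (rule sub_Gm)
  have dec: "sets (G (Suc n)) \<subseteq> sets (G n)" for n
    unfolding G_def sets_Gm by (intro sc_mono) (use box_mono[of n "Suc n"] in auto)
  have fm: "f \<in> borel_measurable P" unfolding f_def using D by measurable
  have fb: "\<bar>f x\<bar> \<le> 1" for x
    unfolding f_def using measure_le_1[of D] measure_nonneg[of P D]
    by (auto simp: indicator_def)
  have orth: "(\<integral>x. f x * h x \<partial>P) = 0"
    if hG: "\<And>n. h \<in> borel_measurable (G n)" and hb: "\<And>x. \<bar>h x\<bar> \<le> 1" for h
  proof -
    have hP: "h \<in> borel_measurable P" using measurable_from_subalg[OF sub hG] .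
    define H where "H = vimage_algebra (space P) h borel"
    have setsH: "sets H = {h -` A \<inter> space P | A. A \<in> sets borel}"
      unfolding H_def by (rule sets_vimage_algebra2) simp
    have HG: "T \<in> sets (G n)" if "T \<in> sets H" for T n
    proof -
      from that obtain A where T: "T = h -` A \<inter> space P" and A: "A \<in> sets borel"
        using setsH by auto
      have "h -` A \<inter> space (G n) \<in> sets (G n)" using measurable_sets[OF hG A] .
      then show ?thesis using T by (simp add: G_def space_Gm)
    qed
    have Htail: "measure P T = 0 \<or> measure P T = 1" if "T \<in> sets H" for T
    proof -
      have "T \<in> tail_field Y"
        by (rule tail_mem) (use HG[OF that] in \<open>auto simp: G_def sets_Gm\<close>)
      then show ?thesis using P_tail unfolding tail_trivial_def by blast
    qed
    have HP: "sets H \<subseteq> sets P"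
      using HG[of _ 0] sub[of 0] by (auto simp: subalgebra_def)
    have subH: "subalgebra P H"
      unfolding subalgebra_def using HP by (simp add: H_def)
    have sfsH: "sigma_finite_subalgebra P H"
      unfolding sigma_finite_subalgebra_def
      using subH finite_measure_restr_to_subalg finite_measure_axioms finite_measure_def by blast
    have hH: "h \<in> borel_measurable H"
      unfolding H_def by (rule measurable_vimage_algebra1) simp
    have ce: "AE x in P. real_cond_exp P H (indicator D) x = measure P D"
    proof (rule sigma_finite_subalgebra.real_cond_exp_charact[OF sfsH])
      fix A assume A: "A \<in> sets H"
      then have AP: "A \<in> sets P" using HP by auto
      have l: "(\<integral>x\<in>A. indicator D x \<partial>P) = measure P (A \<inter> D)"
      proof -
        have "(\<integral>x\<in>A. indicator D x \<partial>P) = (\<integral>x. indicator (A \<inter> D) x \<partial>P)"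
          unfolding set_lebesgue_integral_def by (intro Bochner_Integration.integral_cong) (auto simp: indicator_def)
        also have "\<dots> = measure P (A \<inter> D)" using AP D by simp
        finally show ?thesis .
      qed
      have r: "(\<integral>x\<in>A. measure P D \<partial>P) = measure P A * measure P D"
        unfolding set_lebesgue_integral_def using AP by simp
      have "measure P (A \<inter> D) = measure P A * measure P D"
        using Htail[OF A]
      proof
        assume "measure P A = 0"
        moreover have "measure P (A \<inter> D) \<le> measure P A"
          using AP by (intro finite_measure_mono) auto
        ultimately show ?thesis by (simp add: measure_nonneg antisym)
      next
        assume A1: "measure P A = 1"
        have "measure P (D - A) \<le> measure P (space P - A)"
          using AP D sets.sets_into_space[OF D] by (intro finite_measure_mono) auto
        also have "\<dots> = 0" using prob_compl[OF AP] A1 by simp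
        finally have "measure P (D - A) = 0" by (simp add: measure_nonneg antisym)
        moreover have "measure P (D - A) = measure P D - measure P (D \<inter> A)"
          using finite_measure_Diff'[OF D AP] .
        ultimately show ?thesis using A1 by (simp add: Int_commute)
      qed
      then show "(\<integral>x\<in>A. indicator D x \<partial>P) = (\<integral>x\<in>A. measure P D \<partial>P)"
        using l r by simp
    qed (use D in \<open>auto intro!: integrable_real_indicator simp: less_top[symmetric]\<close>)
    have "(\<integral>x. h x * indicator D x \<partial>P) = (\<integral>x. h x * real_cond_exp P H (indicator D) x \<partial>P)"
    proof (rule sigma_finite_subalgebra.real_cond_exp_intg(2)[OF sfsH, symmetric])
      show "integrable P (\<lambda>x. h x * indicator D x)"
        by (rule integrable_const_bound[where f="\<lambda>x. h x * indicator D x" and B=1])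
           (use hb hP D in \<open>auto simp: indicator_def\<close>)
    qed (use hH D in auto)
    also have "\<dots> = (\<integral>x. h x * measure P D \<partial>P)"
      by (rule integral_cong_AE) (use ce hP D in auto)
    also have "\<dots> = (\<integral>x. h x \<partial>P) * measure P D" by simp
    finally have eq: "(\<integral>x. h x * indicator D x \<partial>P) = (\<integral>x. h x \<partial>P) * measure P D" .
    have hi: "integrable P h"
      by (rule integrable_const_bound[where B=1]) (use hb hP in auto)
    have hDi: "integrable P (\<lambda>x. h x * indicator D x)"
      by (rule integrable_const_bound[where f="\<lambda>x. h x * indicator D x" and B=1])
         (use hb hP D in \<open>auto simp: indicator_def\<close>)
    have "(\<integral>x. f x * h x \<partial>P) = (\<integral>x. h x * indicator D x - measure P D * h x \<partial>P)"
      unfolding f_def by (simp add: algebra_simps)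
    also have "\<dots> = (\<integral>x. h x * indicator D x \<partial>P) - measure P D * (\<integral>x. h x \<partial>P)"
      using hi hDi by simp
    finally show ?thesis using eq by simp
  qed
  obtain n where n: "\<forall>E\<in>sets (G n). \<bar>\<integral>x. f x * indicator E x \<partial>P\<bar> < \<epsilon>"
    using backward_decoupling[where P=P and G=G and f=f and \<epsilon>=\<epsilon>, OF P_prob sub dec fm fb orth e] by blast
  show ?thesis
  proof (intro exI ballI)
    fix E :: "((int ^ 'd) \<Rightarrow> 'u) set" assume E: "E \<in> sigma_coords Y (UNIV - box n)"
    then have EP: "E \<in> sets P" using sc_sets by auto
    have "(\<integral>x. f x * indicator E x \<partial>P) = (\<integral>x. indicator (D \<inter> E) x - measure P D * indicator E x \<partial>P)"
      unfolding f_def by (intro Bochner_Integration.integral_cong) (auto simp: indicator_def)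
    also have "\<dots> = measure P (D \<inter> E) - measure P D * measure P E"
      using D EP by (subst Bochner_Integration.integral_diff)
        (auto intro!: integrable_real_indicator integrable_mult_right simp: less_top[symmetric])
    finally show "\<bar>measure P (D \<inter> E) - measure P D * measure P E\<bar> < \<epsilon>"
      using n E by (simp add: G_def sets_Gm) metis
  qed
qed

end

context tailset
begin

lemma sd_bound:
  assumes X: "X \<in> sets P" and E: "E \<in> sets P" and D: "D \<in> sets P"
  shows "\<bar>measure P (X \<inter> D) - measure P (E \<inter> D)\<bar> \<le> measure P ((X - E) \<union> (E - X))"
proof -
  have sd: "(X - E) \<union> (E - X) \<in> sets P" using X E by auto
  have a: "measure P (X \<inter> D) \<le> measure P (E \<inter> D) + measure P ((X - E) \<union> (E - X))"
  proof -
    have "measure P (X \<inter> D) \<le> measure P ((E \<inter> D) \<union> ((X - E) \<union> (E - X)))"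
      using X E D sd by (intro finite_measure_mono) auto
    also have "\<dots> \<le> measure P (E \<inter> D) + measure P ((X - E) \<union> (E - X))"
      using E D sd by (intro measure_subadditive) auto
    finally show ?thesis .
  qed
  have b: "measure P (E \<inter> D) \<le> measure P (X \<inter> D) + measure P ((X - E) \<union> (E - X))"
  proof -
    have "measure P (E \<inter> D) \<le> measure P ((X \<inter> D) \<union> ((X - E) \<union> (E - X)))"
      using X E D sd by (intro finite_measure_mono) auto
    also have "\<dots> \<le> measure P (X \<inter> D) + measure P ((X - E) \<union> (E - X))"
      using X D sd by (intro measure_subadditive) auto
    finally show ?thesis .
  qed
  show ?thesis using a b by linarith
qed

lemma sets_P_sigma: "sets P = sigma_sets (space P)
     {{f \<in> space P. f i \<in> A} |i A. A \<in> sets Y}"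
  using P_sets space_P unfolding config_space_def by (simp add: sets_PiM_single space_PiM)

lemma approx:
  assumes B: "B \<in> sets P"
  shows "\<forall>\<epsilon>>0. \<exists>J B'. finite J \<and> B' \<in> sigma_coords Y J \<and> measure P ((B - B') \<union> (B' - B)) < \<epsilon>"
proof -
  have "B \<in> sigma_sets (space P) {{f \<in> space P. f i \<in> A} |i A. A \<in> sets Y}"
    using B sets_P_sigma by simp
  then show ?thesis
  proof (induction rule: sigma_sets.induct)
    case (Basic a)
    then obtain i A where a: "a = {f \<in> space P. f i \<in> A}" and A: "A \<in> sets Y" by auto
    have "a \<in> gen Y {i}" unfolding gen_def a using A space_P by auto
    then have "a \<in> sigma_coords Y {i}" unfolding sc_eq by (rule sigma_sets.Basic)
    then show ?case by (intro allI impI exI[of _ "{i}"] exI[of _ a]) auto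
  next
    case Empty
    show ?case by (intro allI impI exI[of _ "{}"] exI[of _ "{}"]) (auto simp: sc_eq intro: sigma_sets.Empty)
  next
    case (Compl a)
    have aP: "a \<in> sets P" using Compl.hyps sets_P_sigma by simp
    show ?case
    proof (intro allI impI)
      fix \<epsilon> :: real assume e: "\<epsilon> > 0"
      then obtain J B' where J: "finite J" and B': "B' \<in> sigma_coords Y J"
        and m: "measure P ((a - B') \<union> (B' - a)) < \<epsilon>" using Compl.IH by blast
      have B'P: "B' \<in> sets P" using B' sc_sets by auto
      have C: "space P - B' \<in> sigma_coords Y J" using B' unfolding sc_eq by (rule sigma_sets.Compl)
      have "measure P (((space P - a) - (space P - B')) \<union> ((space P - B') - (space P - a)))
          \<le> measure P ((a - B') \<union> (B' - a))"
        using aP B'P by (intro finite_measure_mono) auto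
      then show "\<exists>J B'. finite J \<and> B' \<in> sigma_coords Y J \<and>
          measure P (((space P - a) - B') \<union> (B' - (space P - a))) < \<epsilon>"
        using J C m by (intro exI[of _ J] exI[of _ "space P - B'"]) auto
    qed
  next
    case (Union A)
    have AP: "A i \<in> sets P" for i using Union.hyps sets_P_sigma by simp
    define U where "U = \<Union> (range A)"
    define PU where "PU N = (\<Union>i<N. A i)" for N
    have UP: "U \<in> sets P" unfolding U_def using AP by auto
    have PUP: "PU N \<in> sets P" for N unfolding PU_def using AP by auto
    have "incseq PU" by (auto simp: incseq_def PU_def) (meson lessThan_iff order_less_le_trans)
    then have lim: "(\<lambda>N. measure P (PU N)) \<longlonglongrightarrow> measure P (\<Union> (range PU))"
      using PUP by (intro finite_Lim_measure_incseq) auto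
    have "\<Union> (range PU) = U" unfolding PU_def U_def by auto
    with lim have lim': "(\<lambda>N. measure P (PU N)) \<longlonglongrightarrow> measure P U" by simp
    show ?case
    proof (intro allI impI)
      fix \<epsilon> :: real assume e: "\<epsilon> > 0"
      then have "\<epsilon>/2 > 0" by simp
      from order_tendstoD(1)[OF lim', of "measure P U - \<epsilon>/2"] e
      obtain N where N: "measure P U - \<epsilon>/2 < measure P (PU N)"
        by (auto simp: eventually_sequentially)
      define \<delta> where "\<delta> = \<epsilon> / (2 * (real N + 1))"
      have d: "\<delta> > 0" using e by (simp add: \<delta>_def)
      have "\<forall>i. \<exists>J B'. finite J \<and> B' \<in> sigma_coords Y J \<and> measure P ((A i - B') \<union> (B' - A i)) < \<delta>"
        using Union.IH d by blast
      then obtain JJ BB where JB: "\<And>i. finite (JJ i) \<and> BB i \<in> sigma_coords Y (JJ i) \<and>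
          measure P ((A i - BB i) \<union> (BB i - A i)) < \<delta>" by metis
      define J' where "J' = (\<Union>i<N. JJ i)"
      define B' where "B' = (\<Union>i<N. BB i)"
      have J'f: "finite J'" unfolding J'_def using JB by auto
      have BBJ: "BB i \<in> sigma_coords Y J'" if "i < N" for i
        using JB[of i] sc_mono[of "JJ i" J'] that unfolding J'_def by auto
      have B'J: "B' \<in> sigma_coords Y J'"
      proof -
        have "B' \<in> sets (Gm J')" unfolding B'_def by (rule sets.finite_UN) (use BBJ sets_Gm in auto)
        then show ?thesis by (simp add: sets_Gm)
      qed
      have BBP: "BB i \<in> sets P" for i using JB[of i] sc_sets by auto
      have sub: "(U - B') \<union> (B' - U) \<subseteq> (U - PU N) \<union> (\<Union>i<N. (A i - BB i) \<union> (BB i - A i))"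
        unfolding U_def B'_def PU_def by auto
      have SP: "(\<Union>i<N. (A i - BB i) \<union> (BB i - A i)) \<in> sets P" using AP BBP by auto
      have "measure P ((U - B') \<union> (B' - U)) \<le> measure P ((U - PU N) \<union> (\<Union>i<N. (A i - BB i) \<union> (BB i - A i)))"
        using sub UP PUP SP by (intro finite_measure_mono) auto
      also have "\<dots> \<le> measure P (U - PU N) + measure P (\<Union>i<N. (A i - BB i) \<union> (BB i - A i))"
        using UP PUP SP by (intro measure_subadditive) auto
      also have "measure P (\<Union>i<N. (A i - BB i) \<union> (BB i - A i)) \<le> (\<Sum>i<N. measure P ((A i - BB i) \<union> (BB i - A i)))"
        using AP BBP by (intro finite_measure_subadditive_finite) auto
      also have "\<dots> \<le> real (card {..<N}) * \<delta>"
        using JB by (intro sum_bounded_above) (simp add: less_imp_le)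
      also have "measure P (U - PU N) = measure P U - measure P (PU N)"
        using UP PUP by (intro finite_measure_Diff) (auto simp: U_def PU_def)
      finally have "measure P ((U - B') \<union> (B' - U)) \<le> measure P U - measure P (PU N) + real N * \<delta>"
        by simp
      also have "real N * \<delta> < \<epsilon>/2"
      proof -
        have "real N * \<delta> = \<epsilon>/2 * (real N / (real N + 1))" by (simp add: \<delta>_def field_simps)
        also have "\<dots> < \<epsilon>/2 * 1" using e by (intro mult_strict_left_mono) auto
        finally show ?thesis by simp
      qed
      finally have "measure P ((U - B') \<union> (B' - U)) < \<epsilon>" using N by linarith
      then show "\<exists>J B'. finite J \<and> B' \<in> sigma_coords Y J \<and> measure P ((\<Union> (range A) - B') \<union> (B' - \<Union> (range A))) < \<epsilon>"
        using J'f B'J unfolding U_def by blast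
    qed
  qed
qed

lemma shift_meas: "shift w \<in> measurable P P"
  using P_shift[of w] by (simp add: mpt_def)

lemma shift_measure: "X \<in> sets P \<Longrightarrow> measure P (shift w -` X \<inter> space P) = measure P X"
  using P_shift[of w] by (simp add: mpt_def measure_def)

lemma sc_shift:
  assumes X: "X \<in> sigma_coords Y J"
  shows "shift w -` X \<inter> space P \<in> sigma_coords Y ((\<lambda>j. j + w) ` J)"
proof -
  have sp: "shift w \<in> space P \<rightarrow> space P" by (auto intro: measurable_space[OF shift_meas])
  have "shift w -` X \<inter> space P \<in> {shift w -` A \<inter> space P |A. A \<in> sigma_sets (space P) (gen Y J)}"
    using X by (auto simp: sc_eq)
  also have "\<dots> = sigma_sets (space P) {shift w -` A \<inter> space P |A. A \<in> gen Y J}"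
    by (rule sigma_sets_vimage_commute[OF sp])
  also have "\<dots> \<subseteq> sigma_sets (space P) (gen Y ((\<lambda>j. j + w) ` J))"
  proof (rule sigma_sets_mono')
    show "{shift w -` A \<inter> space P |A. A \<in> gen Y J} \<subseteq> gen Y ((\<lambda>j. j + w) ` J)"
    proof
      fix Z assume "Z \<in> {shift w -` A \<inter> space P |A. A \<in> gen Y J}"
      then obtain j C where j: "j \<in> J" and C: "C \<in> sets Y"
        and Z: "Z = shift w -` ((\<lambda>\<omega>. \<omega> j) -` C \<inter> space P) \<inter> space P"
        unfolding gen_def space_P[symmetric] by auto
      have "Z = (\<lambda>\<omega>. \<omega> (j + w)) -` C \<inter> space P"
        unfolding Z using sp by (auto simp: shift_def)
      then show "Z \<in> gen Y ((\<lambda>j. j + w) ` J)"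
        unfolding gen_def space_P[symmetric] using j C by blast
    qed
  qed
  finally show ?thesis by (simp add: sc_eq)
qed

lemma mixing:
  assumes B: "B \<in> sets P" and D: "D \<in> sets P" and e: "\<epsilon> > 0"
  shows "\<exists>W. finite W \<and> (\<forall>w. w \<notin> W \<longrightarrow>
     \<bar>measure P (shift w -` B \<inter> space P \<inter> D) - measure P B * measure P D\<bar> < \<epsilon>)"
proof -
  have e3: "\<epsilon>/3 > 0" using e by simp
  obtain J B' where J: "finite J" and B': "B' \<in> sigma_coords Y J"
    and mB: "measure P ((B - B') \<union> (B' - B)) < \<epsilon>/3"
    using approx[OF B] e3 by blast
  have B'P: "B' \<in> sets P" using B' sc_sets by auto
  obtain r where r: "\<forall>E\<in>sigma_coords Y (UNIV - box r).
      \<bar>measure P (D \<inter> E) - measure P D * measure P E\<bar> < \<epsilon>/3"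
    using decouple[OF D e3] by blast
  define W where "W = (\<lambda>(l, j). l - j) ` (box r \<times> J)"
  have Wf: "finite W" unfolding W_def using finite_box J by auto
  show ?thesis
  proof (intro exI[of _ W] conjI allI impI)
    show "finite W" by (rule Wf)
    fix w assume w: "w \<notin> W"
    have sub: "(\<lambda>j. j + w) ` J \<subseteq> UNIV - box r"
    proof
      fix x assume "x \<in> (\<lambda>j. j + w) ` J"
      then obtain j where j: "j \<in> J" "x = j + w" by auto
      have "x \<notin> box r"
      proof
        assume "x \<in> box r"
        then have "w \<in> W" unfolding W_def using j by (auto intro!: image_eqI[of _ _ "(x, j)"])
        with w show False by simp
      qed
      then show "x \<in> UNIV - box r" by simp
    qed
    define E where "E = shift w -` B' \<inter> space P"
    define X where "X = shift w -` B \<inter> space P"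
    have EJ: "E \<in> sigma_coords Y (UNIV - box r)"
      using sc_shift[OF B', of w] sc_mono[OF sub] unfolding E_def by auto
    have EP: "E \<in> sets P" using EJ sc_sets by auto
    have XP: "X \<in> sets P" unfolding X_def using shift_meas B by (rule measurable_sets)
    have PE: "measure P E = measure P B'" unfolding E_def using shift_measure[OF B'P] .
    have sdX: "(X - E) \<union> (E - X) = shift w -` ((B - B') \<union> (B' - B)) \<inter> space P"
      unfolding X_def E_def by auto
    have msd: "measure P ((X - E) \<union> (E - X)) = measure P ((B - B') \<union> (B' - B))"
      unfolding sdX using B B'P by (intro shift_measure) auto
    have t1: "\<bar>measure P (X \<inter> D) - measure P (E \<inter> D)\<bar> < \<epsilon>/3"
      using sd_bound[OF XP EP D] msd mB by simp
    have t2: "\<bar>measure P (D \<inter> E) - measure P D * measure P E\<bar> < \<epsilon>/3"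
      using r EJ by blast
    have t3: "\<bar>measure P B' - measure P B\<bar> < \<epsilon>/3"
    proof -
      have "\<bar>measure P (B' \<inter> space P) - measure P (B \<inter> space P)\<bar> \<le> measure P ((B' - B) \<union> (B - B'))"
        using sd_bound[OF B'P B] by simp
      then show ?thesis using mB B B'P sets.sets_into_space
        by (simp add: Un_commute Int_absorb2)
    qed
    have t4: "\<bar>measure P D * (measure P B' - measure P B)\<bar> < \<epsilon>/3"
    proof -
      have "\<bar>measure P D * (measure P B' - measure P B)\<bar> = measure P D * \<bar>measure P B' - measure P B\<bar>"
        by (simp add: abs_mult)
      also have "\<dots> \<le> 1 * \<bar>measure P B' - measure P B\<bar>"
        by (intro mult_right_mono) auto
      finally show ?thesis using t3 by simp
    qed
    have eq: "measure P (X \<inter> D) - measure P B * measure P D =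
      (measure P (X \<inter> D) - measure P (E \<inter> D)) + (measure P (D \<inter> E) - measure P D * measure P E)
      + measure P D * (measure P B' - measure P B)"
      using PE by (simp add: Int_commute algebra_simps)
    have "\<bar>measure P (X \<inter> D) - measure P B * measure P D\<bar> < \<epsilon>"
      unfolding eq using t1 t2 t4 by linarith
    then show "\<bar>measure P (shift w -` B \<inter> space P \<inter> D) - measure P B * measure P D\<bar> < \<epsilon>"
      unfolding X_def by simp
  qed
qed

end

lemma shift_shift: "shift a (shift b \<omega>) = shift (a + b) \<omega>"
  by (simp add: shift_def add.assoc)

lemma shift_zero: "shift 0 \<omega> = \<omega>"
  by (simp add: shift_def)

lemma funpow_meas: "T \<in> measurable M M \<Longrightarrow> T ^^ n \<in> measurable M M"
  by (induction n) (auto intro: measurable_comp)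

lemma mpt_distr: assumes "mpt M T" shows "distr M M T = M"
proof (rule measure_eqI)
  show "sets (distr M M T) = sets M" by simp
  fix A assume "A \<in> sets (distr M M T)"
  then show "emeasure (distr M M T) A = emeasure M A"
    using assms by (simp add: mpt_def emeasure_distr)
qed

lemma mpt_funpow: assumes "mpt M T" shows "mpt M (T ^^ n)"
proof (induction n)
  case 0
  show ?case by (simp add: mpt_def Int_absorb2 sets.sets_into_space)
next
  case (Suc n)
  have Tm: "T \<in> measurable M M" using assms by (simp add: mpt_def)
  have Tn: "T ^^ n \<in> measurable M M" using Suc by (simp add: mpt_def)
  show ?case unfolding mpt_def
  proof (intro conjI ballI)
    show "T ^^ Suc n \<in> measurable M M" using funpow_meas[OF Tm] .
    fix A assume A: "A \<in> sets M"
    have eq: "(T ^^ Suc n) -` A \<inter> space M = (T ^^ n) -` (T -` A \<inter> space M) \<inter> space M"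
      using measurable_space[OF Tn] by auto
    have mem: "T -` A \<inter> space M \<in> sets M" using measurable_sets[OF Tm A] .
    have "emeasure M ((T ^^ n) -` (T -` A \<inter> space M) \<inter> space M) = emeasure M (T -` A \<inter> space M)"
      using Suc[unfolded mpt_def, THEN conjunct2, rule_format, OF mem] .
    also have "\<dots> = emeasure M A"
      using assms[unfolded mpt_def, THEN conjunct2, rule_format, OF A] .
    finally show "emeasure M ((T ^^ Suc n) -` A \<inter> space M) = emeasure M A"
      unfolding eq .
  qed
qed

lemma mpt_measure: "mpt M T \<Longrightarrow> A \<in> sets M \<Longrightarrow> measure M (T -` A \<inter> space M) = measure M A"
  by (simp add: mpt_def measure_def)

definition Wv :: "int ^ 'd \<Rightarrow> int ^ 'd \<Rightarrow> int \<times> int \<Rightarrow> int ^ 'd" where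
  "Wv v1 v2 k = fst k *s v1 + snd k *s v2"

lemma theta_eq: "theta v1 v2 k = shift (Wv v1 v2 k)"
  by (rule ext) (simp add: theta_def Wv_def shift_shift)

lemma Wv_add: "Wv v1 v2 (a + b) = Wv v1 v2 a + Wv v1 v2 b"
  by (simp add: Wv_def vec_eq_iff algebra_simps)

lemma Wv_zero: "Wv v1 v2 0 = 0"
  by (simp add: Wv_def vec_eq_iff)

lemma Wv_inj: assumes "lin_indep2 v1 v2" shows "inj (Wv v1 v2)"
proof (rule injI)
  fix a b assume "Wv v1 v2 a = Wv v1 v2 b"
  then have "(fst a - fst b) *s v1 + (snd a - snd b) *s v2 = 0"
    by (simp add: Wv_def vec_eq_iff algebra_simps)
  then have "fst a - fst b = 0 \<and> snd a - snd b = 0"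
    using assms unfolding lin_indep2_def by blast
  then show "a = b" by (simp add: prod_eq_iff)
qed

lemma cocycle_Suc: "cocycle_sum \<tau> \<kappa> (Suc n) t = cocycle_sum \<tau> \<kappa> n t + \<kappa> ((\<tau> ^^ n) t)"
  by (simp add: cocycle_sum_def)

lemma skew_iter:
  "(skew v1 v2 \<tau> \<kappa> ^^ n) (t, \<omega>) = ((\<tau> ^^ n) t, shift (Wv v1 v2 (cocycle_sum \<tau> \<kappa> n t)) \<omega>)"
proof (induction n)
  case 0
  show ?case by (simp add: cocycle_sum_def Wv_zero shift_zero)
next
  case (Suc n)
  show ?case
    using Suc by (simp add: skew_def theta_eq shift_shift cocycle_Suc Wv_add add.commute)
qed

locale skewset = tailset Y P for Y :: "'u measure" and P :: "((int ^ 'd) \<Rightarrow> 'u) measure" +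
  fixes M :: "'a measure" and \<tau> :: "'a \<Rightarrow> 'a" and \<kappa> :: "'a \<Rightarrow> int \<times> int" and v1 v2 :: "int ^ 'd"
  assumes M_prob: "prob_space M" and \<tau>_mpt: "mpt M \<tau>"
    and \<kappa>_meas: "\<kappa> \<in> measurable M (count_space UNIV)"
    and indep: "lin_indep2 v1 v2"
    and transient: "AE t in M. filterlim (\<lambda>n. maxnorm2 (cocycle_sum \<tau> \<kappa> n t)) at_top sequentially"
begin

sublocale M: prob_space M by (rule M_prob)

abbreviation "S \<equiv> skew v1 v2 \<tau> \<kappa>"
abbreviation "ks \<equiv> cocycle_sum \<tau> \<kappa>"
abbreviation "W \<equiv> Wv v1 v2"

lemma \<tau>_meas: "\<tau> \<in> measurable M M" using \<tau>_mpt by (simp add: mpt_def)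

lemma ks_meas: "ks n \<in> measurable M (count_space UNIV)"
proof (induction n)
  case 0
  show ?case by (simp add: cocycle_sum_def)
next
  case (Suc n)
  have pm: "(\<lambda>t. (ks n t, \<kappa> ((\<tau> ^^ n) t))) \<in> measurable M (count_space UNIV \<Otimes>\<^sub>M count_space UNIV)"
  proof (rule measurable_Pair)
    show "ks n \<in> measurable M (count_space UNIV)" by (rule Suc)
    show "(\<lambda>t. \<kappa> ((\<tau> ^^ n) t)) \<in> measurable M (count_space UNIV)"
      using measurable_comp[OF funpow_meas[OF \<tau>_meas] \<kappa>_meas] by (simp add: comp_def)
  qed
  have "count_space (UNIV :: (int \<times> int) set) \<Otimes>\<^sub>M count_space (UNIV :: (int \<times> int) set) = count_space (UNIV \<times> UNIV)"
    by (rule pair_measure_countable) simp_all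
  with pm have pm': "(\<lambda>t. (ks n t, \<kappa> ((\<tau> ^^ n) t))) \<in> measurable M (count_space UNIV)" by simp
  have "(\<lambda>p. fst p + snd p) \<in> measurable (count_space (UNIV :: ((int \<times> int) \<times> (int \<times> int)) set)) (count_space UNIV)"
    by (rule measurable_count_space)
  from measurable_comp[OF pm' this] show ?case
    by (simp add: comp_def cocycle_Suc)
qed

lemma shiftW_meas: "(\<lambda>x. shift (W (fst x)) (snd x)) \<in> measurable (count_space UNIV \<Otimes>\<^sub>M P) P"
proof (rule measurable_pair_measure_countable1)
  show "countable (UNIV :: (int \<times> int) set)" by simp
  fix k :: "int \<times> int"
  show "(\<lambda>y. shift (W (fst (k, y))) (snd (k, y))) \<in> measurable P P"
    using shift_meas[of "W k"] by simp
qed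

lemma S_meas: "S \<in> measurable (M \<Otimes>\<^sub>M P) (M \<Otimes>\<^sub>M P)"
proof -
  have eq: "S = (\<lambda>x. (\<tau> (fst x), shift (W (\<kappa> (fst x))) (snd x)))"
    by (rule ext) (auto simp: skew_def theta_eq split: prod.splits)
  have a: "(\<lambda>x. \<tau> (fst x)) \<in> measurable (M \<Otimes>\<^sub>M P) M"
    using measurable_comp[OF measurable_fst \<tau>_meas] by (simp add: comp_def)
  have b0: "(\<lambda>x. (\<kappa> (fst x), snd x)) \<in> measurable (M \<Otimes>\<^sub>M P) (count_space UNIV \<Otimes>\<^sub>M P)"
  proof (rule measurable_Pair)
    show "(\<lambda>x. \<kappa> (fst x)) \<in> measurable (M \<Otimes>\<^sub>M P) (count_space UNIV)"
      using measurable_comp[OF measurable_fst \<kappa>_meas] by (simp add: comp_def)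
  qed simp
  have b: "(\<lambda>x. shift (W (\<kappa> (fst x))) (snd x)) \<in> measurable (M \<Otimes>\<^sub>M P) P"
    using measurable_comp[OF b0 shiftW_meas] by (simp add: comp_def)
  show ?thesis unfolding eq by (rule measurable_Pair[OF a b])
qed

lemma Siter_meas: "S ^^ n \<in> measurable (M \<Otimes>\<^sub>M P) (M \<Otimes>\<^sub>M P)"
  by (rule funpow_meas[OF S_meas])

lemma mpt_S: "mpt (M \<Otimes>\<^sub>M P) S"
  unfolding mpt_def
proof (intro conjI ballI)
  show "S \<in> measurable (M \<Otimes>\<^sub>M P) (M \<Otimes>\<^sub>M P)" by (rule S_meas)
  fix X assume X: "X \<in> sets (M \<Otimes>\<^sub>M P)"
  define F where "F s = emeasure P (Pair s -` X)" for s
  have Fm: "F \<in> borel_measurable M" unfolding F_def by (rule measurable_emeasure_Pair[OF X])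
  have SX: "S -` X \<inter> space (M \<Otimes>\<^sub>M P) \<in> sets (M \<Otimes>\<^sub>M P)"
    using measurable_sets[OF S_meas X] .
  have sec: "emeasure P (Pair t -` (S -` X \<inter> space (M \<Otimes>\<^sub>M P))) = F (\<tau> t)" if t: "t \<in> space M" for t
  proof -
    have e1: "Pair t -` (S -` X \<inter> space (M \<Otimes>\<^sub>M P)) = shift (W (\<kappa> t)) -` (Pair (\<tau> t) -` X) \<inter> space P"
      using t by (auto simp: skew_def theta_eq space_pair_measure)
    have mem: "Pair (\<tau> t) -` X \<in> sets P" using X by (rule sets_Pair1)
    have "emeasure P (shift (W (\<kappa> t)) -` (Pair (\<tau> t) -` X) \<inter> space P) = emeasure P (Pair (\<tau> t) -` X)"
      using P_shift[of "W (\<kappa> t)", unfolded mpt_def, THEN conjunct2, rule_format, OF mem] .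
    then show ?thesis unfolding e1 F_def .
  qed
  have "emeasure (M \<Otimes>\<^sub>M P) (S -` X \<inter> space (M \<Otimes>\<^sub>M P)) = (\<integral>\<^sup>+ t. emeasure P (Pair t -` (S -` X \<inter> space (M \<Otimes>\<^sub>M P))) \<partial>M)"
    by (rule emeasure_pair_measure_alt[OF SX])
  also have "\<dots> = (\<integral>\<^sup>+ t. F (\<tau> t) \<partial>M)"
    by (rule nn_integral_cong) (rule sec)
  also have "\<dots> = (\<integral>\<^sup>+ t. F t \<partial>distr M M \<tau>)"
    by (rule nn_integral_distr[symmetric]) (use \<tau>_meas Fm in auto)
  also have "\<dots> = (\<integral>\<^sup>+ t. F t \<partial>M)" using mpt_distr[OF \<tau>_mpt] by simp
  also have "\<dots> = emeasure (M \<Otimes>\<^sub>M P) X"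
    unfolding F_def by (rule emeasure_pair_measure_alt[OF X, symmetric])
  finally show "emeasure (M \<Otimes>\<^sub>M P) (S -` X \<inter> space (M \<Otimes>\<^sub>M P)) = emeasure (M \<Otimes>\<^sub>M P) X" .
qed

lemma measure_pair_int:
  assumes Z: "Z \<in> sets (M \<Otimes>\<^sub>M P)"
  shows "measure (M \<Otimes>\<^sub>M P) Z = (\<integral>t. measure P (Pair t -` Z) \<partial>M)"
proof -
  have fm: "(\<lambda>t. measure P (Pair t -` Z)) \<in> borel_measurable M"
    unfolding measure_def by (intro borel_measurable_enn2real measurable_emeasure_Pair[OF Z])
  have fi: "integrable M (\<lambda>t. measure P (Pair t -` Z))"
    by (rule M.integrable_const_bound[where B=1]) (use fm in auto)
  have "emeasure (M \<Otimes>\<^sub>M P) Z = (\<integral>\<^sup>+ t. emeasure P (Pair t -` Z) \<partial>M)"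
    by (rule emeasure_pair_measure_alt[OF Z])
  also have "\<dots> = (\<integral>\<^sup>+ t. ennreal (measure P (Pair t -` Z)) \<partial>M)"
    by (rule nn_integral_cong) (simp add: emeasure_eq_measure)
  also have "\<dots> = ennreal (\<integral>t. measure P (Pair t -` Z) \<partial>M)"
    by (rule nn_integral_eq_integral[OF fi]) simp
  finally show ?thesis
    by (simp add: measure_def)
qed

lemma rect_formula:
  assumes A: "A \<in> sets M" and C: "C \<in> sets M" and B: "B \<in> sets P" and D: "D \<in> sets P"
  shows "measure (M \<Otimes>\<^sub>M P) ((S ^^ n) -` (A \<times> B) \<inter> space (M \<Otimes>\<^sub>M P) \<inter> (C \<times> D)) =
    (\<integral>t. indicator C t * indicator A ((\<tau> ^^ n) t) * measure P (shift (W (ks n t)) -` B \<inter> space P \<inter> D) \<partial>M)"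
proof -
  have Z: "(S ^^ n) -` (A \<times> B) \<inter> space (M \<Otimes>\<^sub>M P) \<inter> (C \<times> D) \<in> sets (M \<Otimes>\<^sub>M P)"
    using measurable_sets[OF Siter_meas, of "A \<times> B"] A B C D by auto
  have sec: "measure P (Pair t -` ((S ^^ n) -` (A \<times> B) \<inter> space (M \<Otimes>\<^sub>M P) \<inter> (C \<times> D))) =
      indicator C t * indicator A ((\<tau> ^^ n) t) * measure P (shift (W (ks n t)) -` B \<inter> space P \<inter> D)"
    if t: "t \<in> space M" for t
  proof -
    have e: "Pair t -` ((S ^^ n) -` (A \<times> B) \<inter> space (M \<Otimes>\<^sub>M P) \<inter> (C \<times> D)) =
       (if t \<in> C \<and> (\<tau> ^^ n) t \<in> A then shift (W (ks n t)) -` B \<inter> space P \<inter> D else {})"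
      using t by (auto simp: skew_iter space_pair_measure)
    show ?thesis unfolding e by (simp add: indicator_def)
  qed
  show ?thesis
    unfolding measure_pair_int[OF Z] by (rule Bochner_Integration.integral_cong[OF refl]) (rule sec)
qed

end

context skewset
begin

lemma phi_conv:
  assumes B: "B \<in> sets P" and D: "D \<in> sets P"
  shows "AE t in M. (\<lambda>n. measure P (shift (W (ks n t)) -` B \<inter> space P \<inter> D) - measure P B * measure P D) \<longlonglongrightarrow> 0"
  using transient
proof eventually_elim
  case (elim t)
  show ?case unfolding tendsto_iff
  proof (intro allI impI)
    fix \<epsilon> :: real assume e: "\<epsilon> > 0"
    obtain W0 where W0: "finite W0" and mix: "\<And>w. w \<notin> W0 \<Longrightarrow>
        \<bar>measure P (shift w -` B \<inter> space P \<inter> D) - measure P B * measure P D\<bar> < \<epsilon>"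
      using mixing[OF B D e] by blast
    define K0 where "K0 = W -` W0"
    have K0f: "finite K0" unfolding K0_def by (rule finite_vimageI[OF W0 Wv_inj[OF indep]])
    define R where "R = Max (insert 0 (maxnorm2 ` K0))"
    have R: "k \<in> K0 \<Longrightarrow> maxnorm2 k \<le> R" for k
      unfolding R_def using K0f by (intro Max_ge) auto
    have ev: "eventually (\<lambda>n. R + 1 \<le> maxnorm2 (ks n t)) sequentially"
      using elim unfolding filterlim_at_top by blast
    show "eventually (\<lambda>n. dist (measure P (shift (W (ks n t)) -` B \<inter> space P \<inter> D) - measure P B * measure P D) 0 < \<epsilon>) sequentially"
      using ev
    proof eventually_elim
      case (elim n)
      then have "ks n t \<notin> K0" using R by fastforce
      then have "W (ks n t) \<notin> W0" unfolding K0_def by simp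
      then show ?case using mix by (simp add: dist_real_def)
    qed
  qed
qed

lemma key_K:
  assumes A: "A \<in> sets M" and C: "C \<in> sets M" and B: "B \<in> sets P" and D: "D \<in> sets P"
  shows "(\<lambda>n. measure (M \<Otimes>\<^sub>M P) ((S ^^ n) -` (A \<times> B) \<inter> space (M \<Otimes>\<^sub>M P) \<inter> (C \<times> D))
      - measure P B * measure P D * measure M ((\<tau> ^^ n) -` A \<inter> space M \<inter> C)) \<longlonglongrightarrow> 0"
proof -
  define c where "c = measure P B * measure P D"
  define g where "g n t = measure P (shift (W (ks n t)) -` B \<inter> space P \<inter> D)" for n t
  define \<phi> where "\<phi> n t = g n t - c" for n t
  have gm: "g n \<in> borel_measurable M" for n
  proof -
    have "(\<lambda>k. measure P (shift (W k) -` B \<inter> space P \<inter> D)) \<in> measurable (count_space UNIV) borel"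
      by (simp add: measurable_count_space_eq1)
    from measurable_comp[OF ks_meas this] show ?thesis by (simp add: g_def[abs_def] comp_def)
  qed
  have \<phi>m: "\<phi> n \<in> borel_measurable M" for n unfolding \<phi>_def using gm by measurable
  have gb: "0 \<le> g n t" "g n t \<le> 1" for n t by (simp_all add: g_def)
  have cb: "0 \<le> c" "c \<le> 1" unfolding c_def by (auto intro: mult_le_one)
  have \<phi>b: "\<bar>\<phi> n t\<bar> \<le> 2" for n t unfolding \<phi>_def using gb[of n t] cb by linarith
  have int_conv: "(\<lambda>n. \<integral>t. \<bar>\<phi> n t\<bar> \<partial>M) \<longlonglongrightarrow> (\<integral>t. 0 \<partial>M)"
  proof (rule integral_dominated_convergence[where w="\<lambda>_. 2"])
    show "AE t in M. (\<lambda>n. \<bar>\<phi> n t\<bar>) \<longlonglongrightarrow> 0"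
      using phi_conv[OF B D] by eventually_elim (simp add: \<phi>_def g_def c_def tendsto_rabs_zero)
    show "AE t in M. norm \<bar>\<phi> n t\<bar> \<le> 2" for n using \<phi>b by simp
  qed (use \<phi>m in auto)
  then have int_conv': "(\<lambda>n. \<integral>t. \<bar>\<phi> n t\<bar> \<partial>M) \<longlonglongrightarrow> 0" by simp
  define ind where "ind n t = (indicator C t * indicator A ((\<tau> ^^ n) t) :: real)" for n t
  have indm: "(\<lambda>t. indicator A ((\<tau> ^^ n) t) :: real) \<in> borel_measurable M" for n
  proof -
    have "(indicator A :: 'a \<Rightarrow> real) \<in> borel_measurable M" using A by simp
    from measurable_comp[OF funpow_meas[OF \<tau>_meas] this] show ?thesis by (simp add: comp_def)
  qed
  have indm': "ind n \<in> borel_measurable M" for n unfolding ind_def using indm[of n] C by measurable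
  have indb: "0 \<le> ind n t" "ind n t \<le> 1" for n t by (auto simp: ind_def indicator_def)
  have mM: "measure M ((\<tau> ^^ n) -` A \<inter> space M \<inter> C) = (\<integral>t. ind n t \<partial>M)" for n
  proof -
    have "(\<integral>t. ind n t \<partial>M) = (\<integral>t. indicator ((\<tau> ^^ n) -` A \<inter> space M \<inter> C) t \<partial>M)"
      by (rule Bochner_Integration.integral_cong[OF refl]) (auto simp: ind_def indicator_def)
    also have "\<dots> = measure M ((\<tau> ^^ n) -` A \<inter> space M \<inter> C \<inter> space M)"
      by (rule Bochner_Integration.integral_indicator)
    finally show ?thesis by (simp add: Int_assoc Int_commute Int_left_commute)
  qed
  have ii: "integrable M (\<lambda>t. ind n t * g n t)" for n
    by (rule M.integrable_const_bound[where B=1])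
       (use indb gb indm' gm in \<open>auto simp: abs_mult intro!: mult_le_one\<close>)
  have ii2: "integrable M (ind n)" for n
    by (rule M.integrable_const_bound[where B=1]) (use indb indm' in auto)
  have diff_eq: "measure (M \<Otimes>\<^sub>M P) ((S ^^ n) -` (A \<times> B) \<inter> space (M \<Otimes>\<^sub>M P) \<inter> (C \<times> D))
      - c * measure M ((\<tau> ^^ n) -` A \<inter> space M \<inter> C) = (\<integral>t. ind n t * \<phi> n t \<partial>M)" for n
  proof -
    have "measure (M \<Otimes>\<^sub>M P) ((S ^^ n) -` (A \<times> B) \<inter> space (M \<Otimes>\<^sub>M P) \<inter> (C \<times> D)) = (\<integral>t. ind n t * g n t \<partial>M)"
      unfolding rect_formula[OF A C B D] ind_def g_def ..
    moreover have "(\<integral>t. ind n t * \<phi> n t \<partial>M) = (\<integral>t. ind n t * g n t \<partial>M) - c * (\<integral>t. ind n t \<partial>M)"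
    proof -
      have "(\<integral>t. ind n t * \<phi> n t \<partial>M) = (\<integral>t. ind n t * g n t - c * ind n t \<partial>M)"
        by (simp add: \<phi>_def algebra_simps)
      also have "\<dots> = (\<integral>t. ind n t * g n t \<partial>M) - (\<integral>t. c * ind n t \<partial>M)"
        using ii ii2 by (intro Bochner_Integration.integral_diff) auto
      finally show ?thesis by simp
    qed
    ultimately show ?thesis using mM by simp
  qed
  have bound: "norm (measure (M \<Otimes>\<^sub>M P) ((S ^^ n) -` (A \<times> B) \<inter> space (M \<Otimes>\<^sub>M P) \<inter> (C \<times> D))
      - c * measure M ((\<tau> ^^ n) -` A \<inter> space M \<inter> C)) \<le> (\<integral>t. \<bar>\<phi> n t\<bar> \<partial>M)" for n
  proof -
    have "\<bar>\<integral>t. ind n t * \<phi> n t \<partial>M\<bar> \<le> (\<integral>t. \<bar>ind n t * \<phi> n t\<bar> \<partial>M)"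
      by (rule integral_abs_bound)
    also have "\<dots> \<le> (\<integral>t. \<bar>\<phi> n t\<bar> \<partial>M)"
    proof (rule integral_mono)
      show "integrable M (\<lambda>t. \<bar>ind n t * \<phi> n t\<bar>)"
      proof (rule M.integrable_const_bound[where B=2])
        show "AE x in M. norm \<bar>ind n x * \<phi> n x\<bar> \<le> 2"
        proof (intro AE_I2)
          fix x
          have "\<bar>ind n x * \<phi> n x\<bar> \<le> \<bar>\<phi> n x\<bar>"
            using indb[of n x] by (simp add: abs_mult mult_left_le_one_le)
          then show "norm \<bar>ind n x * \<phi> n x\<bar> \<le> 2" using \<phi>b[of n x] by simp
        qed
      qed (use indm' \<phi>m in auto)
      show "integrable M (\<lambda>t. \<bar>\<phi> n t\<bar>)"
        by (rule M.integrable_const_bound[where B=2]) (use \<phi>b \<phi>m in auto)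
      fix t show "\<bar>ind n t * \<phi> n t\<bar> \<le> \<bar>\<phi> n t\<bar>"
        using indb[of n t] by (simp add: abs_mult mult_left_le_one_le)
    qed
    finally show ?thesis using diff_eq by simp
  qed
  have "(\<lambda>n. measure (M \<Otimes>\<^sub>M P) ((S ^^ n) -` (A \<times> B) \<inter> space (M \<Otimes>\<^sub>M P) \<inter> (C \<times> D))
      - c * measure M ((\<tau> ^^ n) -` A \<inter> space M \<inter> C)) \<longlonglongrightarrow> 0"
    by (rule Lim_null_comparison[OF always_eventually[OF allI[OF bound]] int_conv'])
  then show ?thesis by (simp add: c_def)
qed

end

lemma pair_dynkin:
  assumes X: "X \<in> sets (M \<Otimes>\<^sub>M N)"
    and rect: "\<And>a b. a \<in> sets M \<Longrightarrow> b \<in> sets N \<Longrightarrow> Q (a \<times> b)"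
    and empty: "Q {}"
    and compl: "\<And>A. A \<in> sets (M \<Otimes>\<^sub>M N) \<Longrightarrow> Q A \<Longrightarrow> Q (space (M \<Otimes>\<^sub>M N) - A)"
    and union: "\<And>A :: nat \<Rightarrow> _. disjoint_family A \<Longrightarrow> range A \<subseteq> sets (M \<Otimes>\<^sub>M N) \<Longrightarrow> (\<And>i. Q (A i)) \<Longrightarrow> Q (\<Union> (range A))"
  shows "Q X"
proof -
  let ?G = "{a \<times> b |a b. a \<in> sets M \<and> b \<in> sets N}"
  have sG: "sets (M \<Otimes>\<^sub>M N) = sigma_sets (space M \<times> space N) ?G" by (rule sets_pair_measure)
  have GP: "?G \<subseteq> Pow (space M \<times> space N)"
  proof
    fix x assume "x \<in> ?G"
    then obtain a b where x: "x = a \<times> b" and a: "a \<in> sets M" and b: "b \<in> sets N" by blast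
    show "x \<in> Pow (space M \<times> space N)"
      using x sets.sets_into_space[OF a] sets.sets_into_space[OF b] by auto
  qed
  have X': "X \<in> sigma_sets (space M \<times> space N) ?G" using X sG by simp
  show ?thesis
  proof (rule sigma_sets_induct_disjoint[OF Int_stable_pair_measure_generator GP X'])
    fix A assume "A \<in> ?G"
    then obtain a b where "A = a \<times> b" "a \<in> sets M" "b \<in> sets N" by blast
    then show "Q A" using rect by simp
  next
    show "Q {}" by (rule empty)
  next
    fix A assume "A \<in> sigma_sets (space M \<times> space N) ?G" "Q A"
    then show "Q (space M \<times> space N - A)"
      using compl[of A] sG by (simp add: space_pair_measure)
  next
    fix A :: "nat \<Rightarrow> _" assume "disjoint_family A" "range A \<subseteq> sigma_sets (space M \<times> space N) ?G" "\<And>i. Q (A i)"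
    then show "Q (\<Union> (range A))" using union[of A] sG by simp
  qed
qed

lemma series_lim:
  fixes c :: "nat \<Rightarrow> nat \<Rightarrow> real"
  assumes lim: "\<And>i. (\<lambda>n. c i n) \<longlonglongrightarrow> L i" and bd: "\<And>i n. \<bar>c i n\<bar> \<le> b i" and sb: "summable b"
  shows "(\<lambda>n. \<Sum>i. c i n) \<longlonglongrightarrow> (\<Sum>i. L i)"
proof -
  have "eventually (\<lambda>n. summable (\<lambda>k. norm (c k n))) sequentially \<and>
        summable (\<lambda>n. norm (L n)) \<and> ((\<lambda>n. suminf (\<lambda>k. c k n)) \<longlongrightarrow> suminf L) sequentially"
  proof (rule tannerys_theorem[where M=b])
    show "((\<lambda>n. c k n) \<longlongrightarrow> L k) sequentially" for k by (rule lim)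
    show "\<forall>\<^sub>F (k, n) in at_top \<times>\<^sub>F sequentially. norm (c k n) \<le> b k"
      by (rule always_eventually) (use bd in auto)
  qed (use sb in auto)
  then show ?thesis by simp
qed

lemma cesaro0:
  fixes \<delta> :: "nat \<Rightarrow> real"
  assumes lim: "\<delta> \<longlonglongrightarrow> 0" and nn: "\<And>k. 0 \<le> \<delta> k" and bd: "\<And>k. \<delta> k \<le> B"
  shows "(\<lambda>n. (\<Sum>k<n. \<delta> k) / real n) \<longlonglongrightarrow> 0"
  unfolding tendsto_iff
proof (intro allI impI)
  fix \<epsilon> :: real assume e: "\<epsilon> > 0"
  have B0: "0 \<le> B" using nn[of 0] bd[of 0] by linarith
  have "eventually (\<lambda>k. \<delta> k < \<epsilon>/2) sequentially"
    using order_tendstoD(2)[OF lim, of "\<epsilon>/2"] e by simp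
  then obtain N where N: "\<And>k. k \<ge> N \<Longrightarrow> \<delta> k < \<epsilon>/2"
    unfolding eventually_sequentially by blast
  have sumb: "(\<Sum>k<n. \<delta> k) \<le> real (min n N) * B + real n * (\<epsilon>/2)" for n
  proof (induction n)
    case 0 then show ?case by simp
  next
    case (Suc n)
    show ?case
    proof (cases "n < N")
      case True
      then have "real (min (Suc n) N) = real (min n N) + 1" by simp
      then have "real (min (Suc n) N) * B = real (min n N) * B + B" by (simp add: algebra_simps)
      moreover have "real (Suc n) * (\<epsilon>/2) = real n * (\<epsilon>/2) + \<epsilon>/2" by (simp add: algebra_simps)
      moreover have "(\<Sum>k<Suc n. \<delta> k) = (\<Sum>k<n. \<delta> k) + \<delta> n" by simp
      ultimately show ?thesis using Suc.IH bd[of n] e by linarith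
    next
      case False
      then have e1: "min (Suc n) N = min n N" by simp
      have e2: "real (Suc n) * (\<epsilon>/2) = real n * (\<epsilon>/2) + \<epsilon>/2" by (simp add: algebra_simps)
      have e3: "(\<Sum>k<Suc n. \<delta> k) = (\<Sum>k<n. \<delta> k) + \<delta> n" by simp
      have d: "\<delta> n < \<epsilon>/2" using N[of n] False by simp
      show ?thesis unfolding e1 e2 e3 using Suc.IH d by linarith
    qed
  qed
  define n0 where "n0 = nat \<lceil>2 * real N * B / \<epsilon>\<rceil> + 1"
  show "eventually (\<lambda>n. dist ((\<Sum>k<n. \<delta> k) / real n) 0 < \<epsilon>) sequentially"
    unfolding eventually_sequentially
  proof (intro exI allI impI)
    fix n assume n: "n0 \<le> n"
    then have npos: "0 < real n" by (simp add: n0_def)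
    have "2 * real N * B / \<epsilon> < real n"
      using n unfolding n0_def by linarith
    then have "2 * real N * B < real n * \<epsilon>" using e by (simp add: field_simps)
    have s0: "0 \<le> (\<Sum>k<n. \<delta> k)" using nn by (simp add: sum_nonneg)
    have "(\<Sum>k<n. \<delta> k) \<le> real N * B + real n * (\<epsilon>/2)"
    proof -
      have "real (min n N) * B \<le> real N * B" using B0 by (intro mult_right_mono) auto
      then show ?thesis using sumb[of n] by linarith
    qed
    also have "\<dots> < real n * \<epsilon>" using \<open>2 * real N * B < real n * \<epsilon>\<close> by simp
    finally have "(\<Sum>k<n. \<delta> k) / real n < \<epsilon>" using npos by (simp add: field_simps)
    then show "dist ((\<Sum>k<n. \<delta> k) / real n) 0 < \<epsilon>" using s0 npos by (simp add: dist_real_def)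
  qed
qed

lemma weak_series:
  fixes c :: "nat \<Rightarrow> nat \<Rightarrow> real"
  assumes lim: "\<And>i. (\<lambda>n. (\<Sum>k<n. \<bar>c i k\<bar>) / real n) \<longlonglongrightarrow> 0"
    and bd: "\<And>i k. \<bar>c i k\<bar> \<le> b i" and sb: "summable b"
  shows "(\<lambda>n. (\<Sum>k<n. \<bar>\<Sum>i. c i k\<bar>) / real n) \<longlonglongrightarrow> 0"
proof -
  define F where "F n = (\<Sum>i. (\<Sum>k<n. \<bar>c i k\<bar>) / real n)" for n
  have Fb: "\<bar>(\<Sum>k<n. \<bar>c i k\<bar>) / real n\<bar> \<le> b i" for i n
  proof (cases "n = 0")
    case True then show ?thesis using bd[of i 0] by simp
  next
    case False
    have "(\<Sum>k<n. \<bar>c i k\<bar>) \<le> real n * b i"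
      using sum_bounded_above[of "{..<n}" "\<lambda>k. \<bar>c i k\<bar>" "b i"] bd by simp
    then show ?thesis using False by (simp add: field_simps sum_nonneg)
  qed
  have F0: "F \<longlonglongrightarrow> (\<Sum>i. (0::real))"
    unfolding F_def by (rule series_lim[OF lim Fb sb])
  then have F0': "F \<longlonglongrightarrow> 0" by simp
  have sa: "summable (\<lambda>i. \<bar>c i k\<bar>)" for k
    by (rule summable_rabs_comparison_test[of _ b]) (use bd sb in auto)
  have le: "norm ((\<Sum>k<n. \<bar>\<Sum>i. c i k\<bar>) / real n) \<le> F n" for n
  proof -
    have "(\<Sum>k<n. \<bar>\<Sum>i. c i k\<bar>) \<le> (\<Sum>k<n. \<Sum>i. \<bar>c i k\<bar>)"
      by (intro sum_mono summable_rabs sa)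
    also have "\<dots> = (\<Sum>i. \<Sum>k<n. \<bar>c i k\<bar>)"
      by (rule suminf_sum[symmetric]) (use sa in auto)
    finally have a: "(\<Sum>k<n. \<bar>\<Sum>i. c i k\<bar>) / real n \<le> (\<Sum>i. \<Sum>k<n. \<bar>c i k\<bar>) / real n"
      by (simp add: divide_right_mono)
    have sum2: "summable (\<lambda>i. \<Sum>k<n. \<bar>c i k\<bar>)"
      by (rule summable_sum) (use sa in auto)
    have "(\<Sum>i. \<Sum>k<n. \<bar>c i k\<bar>) / real n = F n"
      unfolding F_def by (rule suminf_divide[OF sum2, symmetric])
    with a show ?thesis by (simp add: sum_nonneg)
  qed
  show ?thesis
    by (rule Lim_null_comparison[OF always_eventually[OF allI[OF le]] F0'])
qed


context skewset
begin

sublocale MP: prob_space "M \<Otimes>\<^sub>M P"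
  by (rule prob_space_pair[OF M_prob P_prob])

definition an :: "nat \<Rightarrow> ('a \<times> ((int ^ 'd) \<Rightarrow> 'u)) set \<Rightarrow> ('a \<times> ((int ^ 'd) \<Rightarrow> 'u)) set \<Rightarrow> real" where
  "an n X Z = measure (M \<Otimes>\<^sub>M P) ((S ^^ n) -` X \<inter> space (M \<Otimes>\<^sub>M P) \<inter> Z)"

lemma mpt_Sn: "mpt (M \<Otimes>\<^sub>M P) (S ^^ n)"
  by (rule mpt_funpow[OF mpt_S])

lemma Sn_space: "x \<in> space (M \<Otimes>\<^sub>M P) \<Longrightarrow> (S ^^ n) x \<in> space (M \<Otimes>\<^sub>M P)"
  by (rule measurable_space[OF Siter_meas])

lemma pre_sets: "X \<in> sets (M \<Otimes>\<^sub>M P) \<Longrightarrow> (S ^^ n) -` X \<inter> space (M \<Otimes>\<^sub>M P) \<in> sets (M \<Otimes>\<^sub>M P)"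
  by (rule measurable_sets[OF Siter_meas])

lemma pre_measure: "X \<in> sets (M \<Otimes>\<^sub>M P) \<Longrightarrow> measure (M \<Otimes>\<^sub>M P) ((S ^^ n) -` X \<inter> space (M \<Otimes>\<^sub>M P)) = measure (M \<Otimes>\<^sub>M P) X"
  by (rule mpt_measure[OF mpt_Sn])

lemma an_nonneg: "0 \<le> an n X Z" by (simp add: an_def)

lemma an_le_X:
  assumes "X \<in> sets (M \<Otimes>\<^sub>M P)" "Z \<in> sets (M \<Otimes>\<^sub>M P)"
  shows "an n X Z \<le> measure (M \<Otimes>\<^sub>M P) X"
proof -
  have "an n X Z \<le> measure (M \<Otimes>\<^sub>M P) ((S ^^ n) -` X \<inter> space (M \<Otimes>\<^sub>M P))"
    unfolding an_def using pre_sets[OF assms(1)] assms by (intro MP.finite_measure_mono) auto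
  then show ?thesis using pre_measure[OF assms(1)] by simp
qed

lemma an_le_Y:
  assumes "X \<in> sets (M \<Otimes>\<^sub>M P)" "Z \<in> sets (M \<Otimes>\<^sub>M P)"
  shows "an n X Z \<le> measure (M \<Otimes>\<^sub>M P) Z"
  unfolding an_def using assms by (intro MP.finite_measure_mono) auto

lemma an_le_1: "an n X Z \<le> 1"
  by (simp add: an_def)

lemma an_complX:
  assumes X: "X \<in> sets (M \<Otimes>\<^sub>M P)" and Z: "Z \<in> sets (M \<Otimes>\<^sub>M P)"
  shows "an n (space (M \<Otimes>\<^sub>M P) - X) Z = measure (M \<Otimes>\<^sub>M P) Z - an n X Z"
proof -
  have YS: "Z \<subseteq> space (M \<Otimes>\<^sub>M P)" using sets.sets_into_space[OF Z] .
  have "(S ^^ n) -` (space (M \<Otimes>\<^sub>M P) - X) \<inter> space (M \<Otimes>\<^sub>M P) \<inter> Z =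
      Z - ((S ^^ n) -` X \<inter> space (M \<Otimes>\<^sub>M P) \<inter> Z)"
    using YS Sn_space by blast
  moreover have "measure (M \<Otimes>\<^sub>M P) (Z - ((S ^^ n) -` X \<inter> space (M \<Otimes>\<^sub>M P) \<inter> Z)) =
      measure (M \<Otimes>\<^sub>M P) Z - measure (M \<Otimes>\<^sub>M P) ((S ^^ n) -` X \<inter> space (M \<Otimes>\<^sub>M P) \<inter> Z)"
    using pre_sets[OF X] Z by (intro MP.finite_measure_Diff) auto
  ultimately show ?thesis by (simp add: an_def)
qed

lemma an_complY:
  assumes X: "X \<in> sets (M \<Otimes>\<^sub>M P)" and Z: "Z \<in> sets (M \<Otimes>\<^sub>M P)"
  shows "an n X (space (M \<Otimes>\<^sub>M P) - Z) = measure (M \<Otimes>\<^sub>M P) X - an n X Z"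
proof -
  have "(S ^^ n) -` X \<inter> space (M \<Otimes>\<^sub>M P) \<inter> (space (M \<Otimes>\<^sub>M P) - Z) =
      ((S ^^ n) -` X \<inter> space (M \<Otimes>\<^sub>M P)) - ((S ^^ n) -` X \<inter> space (M \<Otimes>\<^sub>M P) \<inter> Z)"
    by blast
  moreover have "measure (M \<Otimes>\<^sub>M P) (((S ^^ n) -` X \<inter> space (M \<Otimes>\<^sub>M P)) - ((S ^^ n) -` X \<inter> space (M \<Otimes>\<^sub>M P) \<inter> Z)) =
      measure (M \<Otimes>\<^sub>M P) ((S ^^ n) -` X \<inter> space (M \<Otimes>\<^sub>M P)) - measure (M \<Otimes>\<^sub>M P) ((S ^^ n) -` X \<inter> space (M \<Otimes>\<^sub>M P) \<inter> Z)"
    using pre_sets[OF X] Z by (intro MP.finite_measure_Diff) auto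
  ultimately show ?thesis using pre_measure[OF X] by (simp add: an_def)
qed

lemma an_unionX:
  assumes A: "disjoint_family A" "range A \<subseteq> sets (M \<Otimes>\<^sub>M P)" and Z: "Z \<in> sets (M \<Otimes>\<^sub>M P)"
  shows "(\<lambda>i. an n (A i) Z) sums an n (\<Union> (range A)) Z"
proof -
  define B where "B i = (S ^^ n) -` A i \<inter> space (M \<Otimes>\<^sub>M P) \<inter> Z" for i
  have "range B \<subseteq> sets (M \<Otimes>\<^sub>M P)" unfolding B_def using pre_sets A Z by auto
  moreover have "disjoint_family B"
    unfolding disjoint_family_on_def
  proof (intro ballI impI)
    fix i j :: nat assume "i \<noteq> j"
    then have "A i \<inter> A j = {}" using A(1) by (simp add: disjoint_family_on_def)
    then show "B i \<inter> B j = {}" unfolding B_def by auto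
  qed
  ultimately have "(\<lambda>i. measure (M \<Otimes>\<^sub>M P) (B i)) sums measure (M \<Otimes>\<^sub>M P) (\<Union> (range B))"
    by (rule MP.finite_measure_UNION)
  moreover have "\<Union> (range B) = (S ^^ n) -` (\<Union> (range A)) \<inter> space (M \<Otimes>\<^sub>M P) \<inter> Z"
    unfolding B_def by auto
  ultimately show ?thesis by (simp add: an_def B_def)
qed

lemma an_unionY:
  assumes X: "X \<in> sets (M \<Otimes>\<^sub>M P)" and A: "disjoint_family A" "range A \<subseteq> sets (M \<Otimes>\<^sub>M P)"
  shows "(\<lambda>i. an n X (A i)) sums an n X (\<Union> (range A))"
proof -
  define B where "B i = (S ^^ n) -` X \<inter> space (M \<Otimes>\<^sub>M P) \<inter> A i" for i
  have "range B \<subseteq> sets (M \<Otimes>\<^sub>M P)" unfolding B_def using pre_sets[OF X] A by auto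
  moreover have "disjoint_family B"
    unfolding disjoint_family_on_def
  proof (intro ballI impI)
    fix i j :: nat assume "i \<noteq> j"
    then have "A i \<inter> A j = {}" using A(1) by (simp add: disjoint_family_on_def)
    then show "B i \<inter> B j = {}" unfolding B_def by auto
  qed
  ultimately have "(\<lambda>i. measure (M \<Otimes>\<^sub>M P) (B i)) sums measure (M \<Otimes>\<^sub>M P) (\<Union> (range B))"
    by (rule MP.finite_measure_UNION)
  moreover have "\<Union> (range B) = (S ^^ n) -` X \<inter> space (M \<Otimes>\<^sub>M P) \<inter> (\<Union> (range A))"
    unfolding B_def by auto
  ultimately show ?thesis by (simp add: an_def B_def)
qed

lemma meas_union:
  assumes A: "disjoint_family A" "range A \<subseteq> sets (M \<Otimes>\<^sub>M P)"
  shows "(\<lambda>i. measure (M \<Otimes>\<^sub>M P) (A i)) sums measure (M \<Otimes>\<^sub>M P) (\<Union> (range A))"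
  using MP.finite_measure_UNION[OF A(2,1)] .

lemma an_empty1: "an n {} Z = 0" by (simp add: an_def)
lemma an_empty2: "an n X {} = 0" by (simp add: an_def)

lemma meas_rect:
  assumes "A \<in> sets M" "B \<in> sets P"
  shows "measure (M \<Otimes>\<^sub>M P) (A \<times> B) = measure M A * measure P B"
proof -
  have "emeasure (M \<Otimes>\<^sub>M P) (A \<times> B) = emeasure M A * emeasure P B"
    by (rule emeasure_pair_measure_Times[OF assms])
  then show ?thesis
    unfolding measure_def by (simp only: enn2real_mult)
qed

lemma key_an:
  assumes A: "A \<in> sets M" and C: "C \<in> sets M" and B: "B \<in> sets P" and D: "D \<in> sets P"
  shows "(\<lambda>n. an n (A \<times> B) (C \<times> D) - measure P B * measure P D * measure M ((\<tau> ^^ n) -` A \<inter> space M \<inter> C)) \<longlonglongrightarrow> 0"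
  using key_K[OF A C B D] by (simp add: an_def)

end

context skewset
begin

lemma strong_part:
  assumes sm: "strongly_mixing M \<tau>"
  shows "strongly_mixing (M \<Otimes>\<^sub>M P) S"
proof -
  have smM: "\<And>A B. A \<in> sets M \<Longrightarrow> B \<in> sets M \<Longrightarrow>
      (\<lambda>n. measure M ((\<tau> ^^ n) -` A \<inter> space M \<inter> B)) \<longlonglongrightarrow> measure M A * measure M B"
    using sm unfolding strongly_mixing_def by blast
  have stepA: "(\<lambda>n. an n X (C \<times> D)) \<longlonglongrightarrow> measure (M \<Otimes>\<^sub>M P) X * measure (M \<Otimes>\<^sub>M P) (C \<times> D)"
    if X: "X \<in> sets (M \<Otimes>\<^sub>M P)" and C: "C \<in> sets M" and D: "D \<in> sets P" for X C D
  proof -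
    have CD: "C \<times> D \<in> sets (M \<Otimes>\<^sub>M P)" using C D by auto
    show ?thesis
    proof (rule pair_dynkin[OF X, where Q="\<lambda>X. (\<lambda>n. an n X (C \<times> D)) \<longlonglongrightarrow> measure (M \<Otimes>\<^sub>M P) X * measure (M \<Otimes>\<^sub>M P) (C \<times> D)"])
      fix a b assume a: "a \<in> sets M" and b: "b \<in> sets P"
      have l: "(\<lambda>n. (an n (a \<times> b) (C \<times> D) - measure P b * measure P D * measure M ((\<tau> ^^ n) -` a \<inter> space M \<inter> C))
          + measure P b * measure P D * measure M ((\<tau> ^^ n) -` a \<inter> space M \<inter> C))
          \<longlonglongrightarrow> 0 + measure P b * measure P D * (measure M a * measure M C)"
        by (intro tendsto_add key_an a b C D tendsto_mult_left smM)
      show "(\<lambda>n. an n (a \<times> b) (C \<times> D)) \<longlonglongrightarrow> measure (M \<Otimes>\<^sub>M P) (a \<times> b) * measure (M \<Otimes>\<^sub>M P) (C \<times> D)"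
        using l by (simp add: meas_rect a b C D algebra_simps)
    next
      show "(\<lambda>n. an n {} (C \<times> D)) \<longlonglongrightarrow> measure (M \<Otimes>\<^sub>M P) {} * measure (M \<Otimes>\<^sub>M P) (C \<times> D)"
        by (simp add: an_empty1)
    next
      fix A assume A: "A \<in> sets (M \<Otimes>\<^sub>M P)"
        and IH: "(\<lambda>n. an n A (C \<times> D)) \<longlonglongrightarrow> measure (M \<Otimes>\<^sub>M P) A * measure (M \<Otimes>\<^sub>M P) (C \<times> D)"
      have "(\<lambda>n. measure (M \<Otimes>\<^sub>M P) (C \<times> D) - an n A (C \<times> D)) \<longlonglongrightarrow>
          measure (M \<Otimes>\<^sub>M P) (C \<times> D) - measure (M \<Otimes>\<^sub>M P) A * measure (M \<Otimes>\<^sub>M P) (C \<times> D)"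
        by (intro tendsto_diff tendsto_const IH)
      then show "(\<lambda>n. an n (space (M \<Otimes>\<^sub>M P) - A) (C \<times> D)) \<longlonglongrightarrow>
          measure (M \<Otimes>\<^sub>M P) (space (M \<Otimes>\<^sub>M P) - A) * measure (M \<Otimes>\<^sub>M P) (C \<times> D)"
        by (simp add: an_complX[OF A CD] MP.prob_compl[OF A] algebra_simps)
    next
      fix A :: "nat \<Rightarrow> _" assume dA: "disjoint_family A" and rA: "range A \<subseteq> sets (M \<Otimes>\<^sub>M P)"
        and IH: "\<And>i. (\<lambda>n. an n (A i) (C \<times> D)) \<longlonglongrightarrow> measure (M \<Otimes>\<^sub>M P) (A i) * measure (M \<Otimes>\<^sub>M P) (C \<times> D)"
      have ms: "(\<lambda>i. measure (M \<Otimes>\<^sub>M P) (A i)) sums measure (M \<Otimes>\<^sub>M P) (\<Union> (range A))"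
        by (rule meas_union[OF dA rA])
      have "(\<lambda>n. \<Sum>i. an n (A i) (C \<times> D)) \<longlonglongrightarrow> (\<Sum>i. measure (M \<Otimes>\<^sub>M P) (A i) * measure (M \<Otimes>\<^sub>M P) (C \<times> D))"
      proof (rule series_lim[OF IH])
        show "\<bar>an n (A i) (C \<times> D)\<bar> \<le> measure (M \<Otimes>\<^sub>M P) (A i)" for i n
          using an_le_X[of "A i" "C \<times> D" n] rA CD an_nonneg[of n "A i" "C \<times> D"] by auto
        show "summable (\<lambda>i. measure (M \<Otimes>\<^sub>M P) (A i))" using ms by (rule sums_summable)
      qed
      moreover have "(\<lambda>n. \<Sum>i. an n (A i) (C \<times> D)) = (\<lambda>n. an n (\<Union> (range A)) (C \<times> D))"
        by (rule ext) (rule sums_unique[OF an_unionX[OF dA rA CD], symmetric])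
      moreover have "(\<Sum>i. measure (M \<Otimes>\<^sub>M P) (A i) * measure (M \<Otimes>\<^sub>M P) (C \<times> D)) =
          measure (M \<Otimes>\<^sub>M P) (\<Union> (range A)) * measure (M \<Otimes>\<^sub>M P) (C \<times> D)"
        using sums_mult2[OF ms] by (simp add: sums_unique[symmetric])
      ultimately show "(\<lambda>n. an n (\<Union> (range A)) (C \<times> D)) \<longlonglongrightarrow>
          measure (M \<Otimes>\<^sub>M P) (\<Union> (range A)) * measure (M \<Otimes>\<^sub>M P) (C \<times> D)" by simp
    qed
  qed
  have stepB: "(\<lambda>n. an n X Z) \<longlonglongrightarrow> measure (M \<Otimes>\<^sub>M P) X * measure (M \<Otimes>\<^sub>M P) Z"
    if X: "X \<in> sets (M \<Otimes>\<^sub>M P)" and Z: "Z \<in> sets (M \<Otimes>\<^sub>M P)" for X Z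
  proof (rule pair_dynkin[OF Z, where Q="\<lambda>Z. (\<lambda>n. an n X Z) \<longlonglongrightarrow> measure (M \<Otimes>\<^sub>M P) X * measure (M \<Otimes>\<^sub>M P) Z"])
    fix c d assume "c \<in> sets M" "d \<in> sets P"
    then show "(\<lambda>n. an n X (c \<times> d)) \<longlonglongrightarrow> measure (M \<Otimes>\<^sub>M P) X * measure (M \<Otimes>\<^sub>M P) (c \<times> d)"
      using stepA[OF X] by blast
  next
    show "(\<lambda>n. an n X {}) \<longlonglongrightarrow> measure (M \<Otimes>\<^sub>M P) X * measure (M \<Otimes>\<^sub>M P) {}"
      by (simp add: an_empty2)
  next
    fix A assume A: "A \<in> sets (M \<Otimes>\<^sub>M P)"
      and IH: "(\<lambda>n. an n X A) \<longlonglongrightarrow> measure (M \<Otimes>\<^sub>M P) X * measure (M \<Otimes>\<^sub>M P) A"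
    have "(\<lambda>n. measure (M \<Otimes>\<^sub>M P) X - an n X A) \<longlonglongrightarrow>
        measure (M \<Otimes>\<^sub>M P) X - measure (M \<Otimes>\<^sub>M P) X * measure (M \<Otimes>\<^sub>M P) A"
      by (intro tendsto_diff tendsto_const IH)
    then show "(\<lambda>n. an n X (space (M \<Otimes>\<^sub>M P) - A)) \<longlonglongrightarrow>
        measure (M \<Otimes>\<^sub>M P) X * measure (M \<Otimes>\<^sub>M P) (space (M \<Otimes>\<^sub>M P) - A)"
      by (simp add: an_complY[OF X A] MP.prob_compl[OF A] algebra_simps)
  next
    fix A :: "nat \<Rightarrow> _" assume dA: "disjoint_family A" and rA: "range A \<subseteq> sets (M \<Otimes>\<^sub>M P)"
      and IH: "\<And>i. (\<lambda>n. an n X (A i)) \<longlonglongrightarrow> measure (M \<Otimes>\<^sub>M P) X * measure (M \<Otimes>\<^sub>M P) (A i)"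
    have ms: "(\<lambda>i. measure (M \<Otimes>\<^sub>M P) (A i)) sums measure (M \<Otimes>\<^sub>M P) (\<Union> (range A))"
      by (rule meas_union[OF dA rA])
    have "(\<lambda>n. \<Sum>i. an n X (A i)) \<longlonglongrightarrow> (\<Sum>i. measure (M \<Otimes>\<^sub>M P) X * measure (M \<Otimes>\<^sub>M P) (A i))"
    proof (rule series_lim[OF IH])
      show "\<bar>an n X (A i)\<bar> \<le> measure (M \<Otimes>\<^sub>M P) (A i)" for i n
        using an_le_Y[of X "A i" n] rA X an_nonneg[of n X "A i"] by auto
      show "summable (\<lambda>i. measure (M \<Otimes>\<^sub>M P) (A i))" using ms by (rule sums_summable)
    qed
    moreover have "(\<lambda>n. \<Sum>i. an n X (A i)) = (\<lambda>n. an n X (\<Union> (range A)))"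
      by (rule ext) (rule sums_unique[OF an_unionY[OF X dA rA], symmetric])
    moreover have "(\<Sum>i. measure (M \<Otimes>\<^sub>M P) X * measure (M \<Otimes>\<^sub>M P) (A i)) =
        measure (M \<Otimes>\<^sub>M P) X * measure (M \<Otimes>\<^sub>M P) (\<Union> (range A))"
      using sums_mult[OF ms] by (simp add: sums_unique[symmetric])
    ultimately show "(\<lambda>n. an n X (\<Union> (range A))) \<longlonglongrightarrow>
        measure (M \<Otimes>\<^sub>M P) X * measure (M \<Otimes>\<^sub>M P) (\<Union> (range A))" by simp
  qed
  show ?thesis
    unfolding strongly_mixing_def using mpt_S stepB by (simp add: an_def)
qed

lemma weak_part:
  assumes wm: "weakly_mixing M \<tau>"
  shows "weakly_mixing (M \<Otimes>\<^sub>M P) S"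
proof -
  have wmM: "\<And>A B. A \<in> sets M \<Longrightarrow> B \<in> sets M \<Longrightarrow>
      (\<lambda>n. (\<Sum>k<n. \<bar>measure M ((\<tau> ^^ k) -` A \<inter> space M \<inter> B) - measure M A * measure M B\<bar>) / real n) \<longlonglongrightarrow> 0"
    using wm unfolding weakly_mixing_def by blast
  have csum_le: "(\<Sum>k<n. \<bar>x k\<bar>) / real n \<le> (\<Sum>k<n. \<bar>y k\<bar>) / real n + (\<Sum>k<n. \<bar>z k\<bar>) / real n"
    if "\<And>k. \<bar>x k\<bar> \<le> \<bar>y k\<bar> + \<bar>z k\<bar>" for x y z :: "nat \<Rightarrow> real" and n
  proof -
    have "(\<Sum>k<n. \<bar>x k\<bar>) \<le> (\<Sum>k<n. \<bar>y k\<bar> + \<bar>z k\<bar>)" by (intro sum_mono that)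
    then have "(\<Sum>k<n. \<bar>x k\<bar>) / real n \<le> (\<Sum>k<n. \<bar>y k\<bar> + \<bar>z k\<bar>) / real n"
      by (simp add: divide_right_mono)
    then show ?thesis by (simp add: sum.distrib add_divide_distrib)
  qed
  have stepA: "(\<lambda>n. (\<Sum>k<n. \<bar>an k X (C \<times> D) - measure (M \<Otimes>\<^sub>M P) X * measure (M \<Otimes>\<^sub>M P) (C \<times> D)\<bar>) / real n) \<longlonglongrightarrow> 0"
    if X: "X \<in> sets (M \<Otimes>\<^sub>M P)" and C: "C \<in> sets M" and D: "D \<in> sets P" for X C D
  proof -
    have CD: "C \<times> D \<in> sets (M \<Otimes>\<^sub>M P)" using C D by auto
    show ?thesis
    proof (rule pair_dynkin[OF X, where Q="\<lambda>X. (\<lambda>n. (\<Sum>k<n. \<bar>an k X (C \<times> D) - measure (M \<Otimes>\<^sub>M P) X * measure (M \<Otimes>\<^sub>M P) (C \<times> D)\<bar>) / real n) \<longlonglongrightarrow> 0"])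
      fix a b assume a: "a \<in> sets M" and b: "b \<in> sets P"
      define c where "c = measure P b * measure P D"
      define dK where "dK k = an k (a \<times> b) (C \<times> D) - c * measure M ((\<tau> ^^ k) -` a \<inter> space M \<inter> C)" for k
      define e where "e k = measure M ((\<tau> ^^ k) -` a \<inter> space M \<inter> C) - measure M a * measure M C" for k
      have c01: "0 \<le> c" "c \<le> 1" unfolding c_def by (auto intro: mult_le_one)
      have dK0: "dK \<longlonglongrightarrow> 0" unfolding dK_def c_def using key_an[OF a C b D] by (simp add: mult.assoc)
      have dKb: "\<bar>dK k\<bar> \<le> 2" for k
      proof -
        have "0 \<le> c * measure M ((\<tau> ^^ k) -` a \<inter> space M \<inter> C)" using c01 by simp
        moreover have "c * measure M ((\<tau> ^^ k) -` a \<inter> space M \<inter> C) \<le> 1" using c01 by (intro mult_le_one) auto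
        ultimately show ?thesis unfolding dK_def using an_nonneg[of k "a \<times> b" "C \<times> D"] an_le_1[of k "a \<times> b" "C \<times> D"] by (simp add: abs_le_iff)
      qed
      have cz1: "(\<lambda>n. (\<Sum>k<n. \<bar>dK k\<bar>) / real n) \<longlonglongrightarrow> 0"
        by (rule cesaro0[where B=2]) (use dK0 tendsto_rabs_zero dKb in auto)
      have cz2: "(\<lambda>n. (\<Sum>k<n. \<bar>e k\<bar>) / real n) \<longlonglongrightarrow> 0"
        unfolding e_def by (rule wmM[OF a C])
      have eq: "an k (a \<times> b) (C \<times> D) - measure (M \<Otimes>\<^sub>M P) (a \<times> b) * measure (M \<Otimes>\<^sub>M P) (C \<times> D) = dK k + c * e k" for k
        by (simp add: dK_def e_def c_def meas_rect a b C D algebra_simps)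
      have pw: "\<bar>an k (a \<times> b) (C \<times> D) - measure (M \<Otimes>\<^sub>M P) (a \<times> b) * measure (M \<Otimes>\<^sub>M P) (C \<times> D)\<bar> \<le> \<bar>dK k\<bar> + \<bar>e k\<bar>" for k
      proof -
        have "\<bar>c * e k\<bar> \<le> \<bar>e k\<bar>" using c01 by (simp add: abs_mult mult_left_le_one_le)
        then show ?thesis unfolding eq by linarith
      qed
      have "(\<lambda>n. (\<Sum>k<n. \<bar>dK k\<bar>) / real n + (\<Sum>k<n. \<bar>e k\<bar>) / real n) \<longlonglongrightarrow> 0 + 0"
        by (intro tendsto_add cz1 cz2)
      then have z: "(\<lambda>n. (\<Sum>k<n. \<bar>dK k\<bar>) / real n + (\<Sum>k<n. \<bar>e k\<bar>) / real n) \<longlonglongrightarrow> 0" by simp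
      show "(\<lambda>n. (\<Sum>k<n. \<bar>an k (a \<times> b) (C \<times> D) - measure (M \<Otimes>\<^sub>M P) (a \<times> b) * measure (M \<Otimes>\<^sub>M P) (C \<times> D)\<bar>) / real n) \<longlonglongrightarrow> 0"
      proof (rule Lim_null_comparison[OF _ z])
        show "\<forall>\<^sub>F n in sequentially. norm ((\<Sum>k<n. \<bar>an k (a \<times> b) (C \<times> D) - measure (M \<Otimes>\<^sub>M P) (a \<times> b) * measure (M \<Otimes>\<^sub>M P) (C \<times> D)\<bar>) / real n)
            \<le> (\<Sum>k<n. \<bar>dK k\<bar>) / real n + (\<Sum>k<n. \<bar>e k\<bar>) / real n"
          by (rule always_eventually) (use csum_le[OF pw] in \<open>simp add: sum_nonneg\<close>)
      qed
    next
      show "(\<lambda>n. (\<Sum>k<n. \<bar>an k {} (C \<times> D) - measure (M \<Otimes>\<^sub>M P) {} * measure (M \<Otimes>\<^sub>M P) (C \<times> D)\<bar>) / real n) \<longlonglongrightarrow> 0"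
        by (simp add: an_empty1)
    next
      fix A assume A: "A \<in> sets (M \<Otimes>\<^sub>M P)"
        and IH: "(\<lambda>n. (\<Sum>k<n. \<bar>an k A (C \<times> D) - measure (M \<Otimes>\<^sub>M P) A * measure (M \<Otimes>\<^sub>M P) (C \<times> D)\<bar>) / real n) \<longlonglongrightarrow> 0"
      have "an k (space (M \<Otimes>\<^sub>M P) - A) (C \<times> D) - measure (M \<Otimes>\<^sub>M P) (space (M \<Otimes>\<^sub>M P) - A) * measure (M \<Otimes>\<^sub>M P) (C \<times> D)
          = - (an k A (C \<times> D) - measure (M \<Otimes>\<^sub>M P) A * measure (M \<Otimes>\<^sub>M P) (C \<times> D))" for k
        by (simp add: an_complX[OF A CD] MP.prob_compl[OF A] algebra_simps)
      then show "(\<lambda>n. (\<Sum>k<n. \<bar>an k (space (M \<Otimes>\<^sub>M P) - A) (C \<times> D) - measure (M \<Otimes>\<^sub>M P) (space (M \<Otimes>\<^sub>M P) - A) * measure (M \<Otimes>\<^sub>M P) (C \<times> D)\<bar>) / real n) \<longlonglongrightarrow> 0"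
        using IH by (simp only: abs_minus_cancel)
    next
      fix A :: "nat \<Rightarrow> _" assume dA: "disjoint_family A" and rA: "range A \<subseteq> sets (M \<Otimes>\<^sub>M P)"
        and IH: "\<And>i. (\<lambda>n. (\<Sum>k<n. \<bar>an k (A i) (C \<times> D) - measure (M \<Otimes>\<^sub>M P) (A i) * measure (M \<Otimes>\<^sub>M P) (C \<times> D)\<bar>) / real n) \<longlonglongrightarrow> 0"
      have ms: "(\<lambda>i. measure (M \<Otimes>\<^sub>M P) (A i)) sums measure (M \<Otimes>\<^sub>M P) (\<Union> (range A))"
        by (rule meas_union[OF dA rA])
      have ws: "(\<lambda>n. (\<Sum>k<n. \<bar>\<Sum>i. an k (A i) (C \<times> D) - measure (M \<Otimes>\<^sub>M P) (A i) * measure (M \<Otimes>\<^sub>M P) (C \<times> D)\<bar>) / real n) \<longlonglongrightarrow> 0"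
      proof (rule weak_series[OF IH])
        show "\<bar>an k (A i) (C \<times> D) - measure (M \<Otimes>\<^sub>M P) (A i) * measure (M \<Otimes>\<^sub>M P) (C \<times> D)\<bar> \<le> 2 * measure (M \<Otimes>\<^sub>M P) (A i)" for i k
        proof -
          have Ai: "A i \<in> sets (M \<Otimes>\<^sub>M P)" using rA by auto
          have "measure (M \<Otimes>\<^sub>M P) (A i) * measure (M \<Otimes>\<^sub>M P) (C \<times> D) \<le> measure (M \<Otimes>\<^sub>M P) (A i)"
            by (rule mult_right_le_one_le) auto
          moreover have "0 \<le> measure (M \<Otimes>\<^sub>M P) (A i) * measure (M \<Otimes>\<^sub>M P) (C \<times> D)" by simp
          ultimately show ?thesis using an_le_X[OF Ai CD, of k] an_nonneg[of k "A i" "C \<times> D"] measure_nonneg[of "M \<Otimes>\<^sub>M P" "A i"] by (simp only: abs_le_iff) linarith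
        qed
        show "summable (\<lambda>i. 2 * measure (M \<Otimes>\<^sub>M P) (A i))"
          by (intro summable_mult sums_summable[OF ms])
      qed
      have "(\<Sum>i. an k (A i) (C \<times> D) - measure (M \<Otimes>\<^sub>M P) (A i) * measure (M \<Otimes>\<^sub>M P) (C \<times> D))
          = an k (\<Union> (range A)) (C \<times> D) - measure (M \<Otimes>\<^sub>M P) (\<Union> (range A)) * measure (M \<Otimes>\<^sub>M P) (C \<times> D)" for k
        by (rule sums_unique[symmetric], rule sums_diff[OF an_unionX[OF dA rA CD] sums_mult2[OF ms]])
      then show "(\<lambda>n. (\<Sum>k<n. \<bar>an k (\<Union> (range A)) (C \<times> D) - measure (M \<Otimes>\<^sub>M P) (\<Union> (range A)) * measure (M \<Otimes>\<^sub>M P) (C \<times> D)\<bar>) / real n) \<longlonglongrightarrow> 0"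
        using ws by simp
    qed
  qed
  have stepB: "(\<lambda>n. (\<Sum>k<n. \<bar>an k X Z - measure (M \<Otimes>\<^sub>M P) X * measure (M \<Otimes>\<^sub>M P) Z\<bar>) / real n) \<longlonglongrightarrow> 0"
    if X: "X \<in> sets (M \<Otimes>\<^sub>M P)" and Z: "Z \<in> sets (M \<Otimes>\<^sub>M P)" for X Z
  proof (rule pair_dynkin[OF Z, where Q="\<lambda>Z. (\<lambda>n. (\<Sum>k<n. \<bar>an k X Z - measure (M \<Otimes>\<^sub>M P) X * measure (M \<Otimes>\<^sub>M P) Z\<bar>) / real n) \<longlonglongrightarrow> 0"])
    fix c d assume "c \<in> sets M" "d \<in> sets P"
    then show "(\<lambda>n. (\<Sum>k<n. \<bar>an k X (c \<times> d) - measure (M \<Otimes>\<^sub>M P) X * measure (M \<Otimes>\<^sub>M P) (c \<times> d)\<bar>) / real n) \<longlonglongrightarrow> 0"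
      using stepA[OF X] by blast
  next
    show "(\<lambda>n. (\<Sum>k<n. \<bar>an k X {} - measure (M \<Otimes>\<^sub>M P) X * measure (M \<Otimes>\<^sub>M P) {}\<bar>) / real n) \<longlonglongrightarrow> 0"
      by (simp add: an_empty2)
  next
    fix A assume A: "A \<in> sets (M \<Otimes>\<^sub>M P)"
      and IH: "(\<lambda>n. (\<Sum>k<n. \<bar>an k X A - measure (M \<Otimes>\<^sub>M P) X * measure (M \<Otimes>\<^sub>M P) A\<bar>) / real n) \<longlonglongrightarrow> 0"
    have "an k X (space (M \<Otimes>\<^sub>M P) - A) - measure (M \<Otimes>\<^sub>M P) X * measure (M \<Otimes>\<^sub>M P) (space (M \<Otimes>\<^sub>M P) - A)
        = - (an k X A - measure (M \<Otimes>\<^sub>M P) X * measure (M \<Otimes>\<^sub>M P) A)" for k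
      by (simp add: an_complY[OF X A] MP.prob_compl[OF A] algebra_simps)
    then show "(\<lambda>n. (\<Sum>k<n. \<bar>an k X (space (M \<Otimes>\<^sub>M P) - A) - measure (M \<Otimes>\<^sub>M P) X * measure (M \<Otimes>\<^sub>M P) (space (M \<Otimes>\<^sub>M P) - A)\<bar>) / real n) \<longlonglongrightarrow> 0"
      using IH by (simp only: abs_minus_cancel)
  next
    fix A :: "nat \<Rightarrow> _" assume dA: "disjoint_family A" and rA: "range A \<subseteq> sets (M \<Otimes>\<^sub>M P)"
      and IH: "\<And>i. (\<lambda>n. (\<Sum>k<n. \<bar>an k X (A i) - measure (M \<Otimes>\<^sub>M P) X * measure (M \<Otimes>\<^sub>M P) (A i)\<bar>) / real n) \<longlonglongrightarrow> 0"
    have ms: "(\<lambda>i. measure (M \<Otimes>\<^sub>M P) (A i)) sums measure (M \<Otimes>\<^sub>M P) (\<Union> (range A))"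
      by (rule meas_union[OF dA rA])
    have ws: "(\<lambda>n. (\<Sum>k<n. \<bar>\<Sum>i. an k X (A i) - measure (M \<Otimes>\<^sub>M P) X * measure (M \<Otimes>\<^sub>M P) (A i)\<bar>) / real n) \<longlonglongrightarrow> 0"
    proof (rule weak_series[OF IH])
      show "\<bar>an k X (A i) - measure (M \<Otimes>\<^sub>M P) X * measure (M \<Otimes>\<^sub>M P) (A i)\<bar> \<le> 2 * measure (M \<Otimes>\<^sub>M P) (A i)" for i k
      proof -
        have Ai: "A i \<in> sets (M \<Otimes>\<^sub>M P)" using rA by auto
        have "measure (M \<Otimes>\<^sub>M P) X * measure (M \<Otimes>\<^sub>M P) (A i) \<le> measure (M \<Otimes>\<^sub>M P) (A i)"
          by (rule mult_left_le_one_le) auto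
        moreover have "0 \<le> measure (M \<Otimes>\<^sub>M P) X * measure (M \<Otimes>\<^sub>M P) (A i)" by simp
        ultimately show ?thesis using an_le_Y[OF X Ai, of k] an_nonneg[of k X "A i"] measure_nonneg[of "M \<Otimes>\<^sub>M P" "A i"] by (simp only: abs_le_iff) linarith
      qed
      show "summable (\<lambda>i. 2 * measure (M \<Otimes>\<^sub>M P) (A i))"
        by (intro summable_mult sums_summable[OF ms])
    qed
    have "(\<Sum>i. an k X (A i) - measure (M \<Otimes>\<^sub>M P) X * measure (M \<Otimes>\<^sub>M P) (A i))
        = an k X (\<Union> (range A)) - measure (M \<Otimes>\<^sub>M P) X * measure (M \<Otimes>\<^sub>M P) (\<Union> (range A))" for k
      by (rule sums_unique[symmetric], rule sums_diff[OF an_unionY[OF X dA rA] sums_mult[OF ms]])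
    then show "(\<lambda>n. (\<Sum>k<n. \<bar>an k X (\<Union> (range A)) - measure (M \<Otimes>\<^sub>M P) X * measure (M \<Otimes>\<^sub>M P) (\<Union> (range A))\<bar>) / real n) \<longlonglongrightarrow> 0"
      using ws by simp
  qed
  show ?thesis
    unfolding weakly_mixing_def using mpt_S stepB by (simp add: an_def)
qed

end

context skewset
begin

lemma measure_Pair_meas:
  assumes Z: "Z \<in> sets (M \<Otimes>\<^sub>M P)"
  shows "(\<lambda>t. measure P (Pair t -` Z)) \<in> borel_measurable M"
  unfolding measure_def by (intro borel_measurable_enn2real measurable_emeasure_Pair[OF Z])

lemma erg_stepA:
  assumes X: "X \<in> sets (M \<Otimes>\<^sub>M P)" and C: "C \<in> sets M" and D: "D \<in> sets P"
  shows "(\<lambda>n. an n X (C \<times> D) - measure P D * an n X (C \<times> space P)) \<longlonglongrightarrow> 0"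
proof -
  have CD: "C \<times> D \<in> sets (M \<Otimes>\<^sub>M P)" using C D by auto
  have CO: "C \<times> space P \<in> sets (M \<Otimes>\<^sub>M P)" using C by auto
  show ?thesis
  proof (rule pair_dynkin[OF X, where Q="\<lambda>X. (\<lambda>n. an n X (C \<times> D) - measure P D * an n X (C \<times> space P)) \<longlonglongrightarrow> 0"])
    fix a b assume a: "a \<in> sets M" and b: "b \<in> sets P"
    have K1: "(\<lambda>n. an n (a \<times> b) (C \<times> D) - measure P b * measure P D * measure M ((\<tau> ^^ n) -` a \<inter> space M \<inter> C)) \<longlonglongrightarrow> 0"
      by (rule key_an[OF a C b D])
    have K2: "(\<lambda>n. an n (a \<times> b) (C \<times> space P) - measure P b * measure P (space P) * measure M ((\<tau> ^^ n) -` a \<inter> space M \<inter> C)) \<longlonglongrightarrow> 0"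
      by (rule key_an[OF a C b sets.top])
    have "(\<lambda>n. (an n (a \<times> b) (C \<times> D) - measure P b * measure P D * measure M ((\<tau> ^^ n) -` a \<inter> space M \<inter> C))
        - measure P D * (an n (a \<times> b) (C \<times> space P) - measure P b * measure P (space P) * measure M ((\<tau> ^^ n) -` a \<inter> space M \<inter> C)))
        \<longlonglongrightarrow> 0 - measure P D * 0"
      by (intro tendsto_diff tendsto_mult K1 K2 tendsto_const)
    then show "(\<lambda>n. an n (a \<times> b) (C \<times> D) - measure P D * an n (a \<times> b) (C \<times> space P)) \<longlonglongrightarrow> 0"
      by (simp add: prob_space algebra_simps)
  next
    show "(\<lambda>n. an n {} (C \<times> D) - measure P D * an n {} (C \<times> space P)) \<longlonglongrightarrow> 0"
      by (simp add: an_empty1)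
  next
    fix A assume A: "A \<in> sets (M \<Otimes>\<^sub>M P)"
      and IH: "(\<lambda>n. an n A (C \<times> D) - measure P D * an n A (C \<times> space P)) \<longlonglongrightarrow> 0"
    have r: "measure (M \<Otimes>\<^sub>M P) (C \<times> D) = measure P D * measure (M \<Otimes>\<^sub>M P) (C \<times> space P)"
      by (simp add: meas_rect C D prob_space)
    have "an n (space (M \<Otimes>\<^sub>M P) - A) (C \<times> D) - measure P D * an n (space (M \<Otimes>\<^sub>M P) - A) (C \<times> space P)
        = - (an n A (C \<times> D) - measure P D * an n A (C \<times> space P))" for n
      by (simp add: an_complX[OF A CD] an_complX[OF A CO] r algebra_simps)
    moreover have "(\<lambda>n. - (an n A (C \<times> D) - measure P D * an n A (C \<times> space P))) \<longlonglongrightarrow> - 0"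
      by (intro tendsto_minus IH)
    ultimately show "(\<lambda>n. an n (space (M \<Otimes>\<^sub>M P) - A) (C \<times> D) - measure P D * an n (space (M \<Otimes>\<^sub>M P) - A) (C \<times> space P)) \<longlonglongrightarrow> 0"
      by simp
  next
    fix A :: "nat \<Rightarrow> _" assume dA: "disjoint_family A" and rA: "range A \<subseteq> sets (M \<Otimes>\<^sub>M P)"
      and IH: "\<And>i. (\<lambda>n. an n (A i) (C \<times> D) - measure P D * an n (A i) (C \<times> space P)) \<longlonglongrightarrow> 0"
    have ms: "(\<lambda>i. measure (M \<Otimes>\<^sub>M P) (A i)) sums measure (M \<Otimes>\<^sub>M P) (\<Union> (range A))"
      by (rule meas_union[OF dA rA])
    have "(\<lambda>n. \<Sum>i. an n (A i) (C \<times> D) - measure P D * an n (A i) (C \<times> space P)) \<longlonglongrightarrow> (\<Sum>i. (0::real))"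
    proof (rule series_lim[OF IH])
      show "\<bar>an n (A i) (C \<times> D) - measure P D * an n (A i) (C \<times> space P)\<bar> \<le> 2 * measure (M \<Otimes>\<^sub>M P) (A i)" for i n
      proof -
        have Ai: "A i \<in> sets (M \<Otimes>\<^sub>M P)" using rA by auto
        have "measure P D * an n (A i) (C \<times> space P) \<le> an n (A i) (C \<times> space P)"
          by (rule mult_left_le_one_le) (auto simp: an_nonneg)
        moreover have "0 \<le> measure P D * an n (A i) (C \<times> space P)" by (simp add: an_nonneg)
        ultimately show ?thesis
          using an_le_X[OF Ai CD, of n] an_le_X[OF Ai CO, of n] an_nonneg[of n "A i" "C \<times> D"]
          by (simp only: abs_le_iff) linarith
      qed
      show "summable (\<lambda>i. 2 * measure (M \<Otimes>\<^sub>M P) (A i))"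
        by (intro summable_mult sums_summable[OF ms])
    qed
    moreover have "(\<Sum>i. an n (A i) (C \<times> D) - measure P D * an n (A i) (C \<times> space P))
        = an n (\<Union> (range A)) (C \<times> D) - measure P D * an n (\<Union> (range A)) (C \<times> space P)" for n
      by (rule sums_unique[symmetric], rule sums_diff[OF an_unionX[OF dA rA CD] sums_mult[OF an_unionX[OF dA rA CO]]])
    ultimately show "(\<lambda>n. an n (\<Union> (range A)) (C \<times> D) - measure P D * an n (\<Union> (range A)) (C \<times> space P)) \<longlonglongrightarrow> 0"
      by simp
  qed
qed

lemma inv_iter:
  assumes inv: "S -` E \<inter> space (M \<Otimes>\<^sub>M P) = E"
  shows "(S ^^ n) -` E \<inter> space (M \<Otimes>\<^sub>M P) = E"
proof (induction n)
  case 0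
  show ?case using inv by auto
next
  case (Suc n)
  have "(S ^^ Suc n) -` E \<inter> space (M \<Otimes>\<^sub>M P) = (S ^^ n) -` (S -` E \<inter> space (M \<Otimes>\<^sub>M P)) \<inter> space (M \<Otimes>\<^sub>M P)"
    using Sn_space by auto
  also have "\<dots> = (S ^^ n) -` E \<inter> space (M \<Otimes>\<^sub>M P)" by (simp only: inv)
  also have "\<dots> = E" by (rule Suc)
  finally show ?case .
qed

end

context skewset
begin

lemma ergodic_part:
  assumes erg: "ergodic M \<tau>"
  shows "ergodic (M \<Otimes>\<^sub>M P) S"
  unfolding ergodic_def
proof (intro conjI ballI impI)
  show "mpt (M \<Otimes>\<^sub>M P) S" by (rule mpt_S)
  fix E assume E: "E \<in> sets (M \<Otimes>\<^sub>M P)" and inv: "S -` E \<inter> space (M \<Otimes>\<^sub>M P) = E"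
  have ES: "E \<subseteq> space (M \<Otimes>\<^sub>M P)" using sets.sets_into_space[OF E] .
  have anE: "an n E Z = measure (M \<Otimes>\<^sub>M P) (E \<inter> Z)" for n Z
    unfolding an_def using inv_iter[OF inv, of n] by simp
  have rectEq: "measure (M \<Otimes>\<^sub>M P) (E \<inter> (C \<times> D)) = measure P D * measure (M \<Otimes>\<^sub>M P) (E \<inter> (C \<times> space P))"
    if C: "C \<in> sets M" and D: "D \<in> sets P" for C D
  proof -
    have "(\<lambda>n. measure (M \<Otimes>\<^sub>M P) (E \<inter> (C \<times> D)) - measure P D * measure (M \<Otimes>\<^sub>M P) (E \<inter> (C \<times> space P))) \<longlonglongrightarrow> 0"
      using erg_stepA[OF E C D] by (simp add: anE)
    then show ?thesis by (simp add: LIMSEQ_const_iff)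
  qed
  define h where "h t = measure P (Pair t -` E)" for t
  have hm: "h \<in> borel_measurable M" unfolding h_def[abs_def] by (rule measure_Pair_meas[OF E])
  have hb: "0 \<le> h t" "h t \<le> 1" for t by (simp_all add: h_def)
  have hint: "integrable M h" by (rule M.integrable_const_bound[where B=1]) (use hm hb in auto)
  have mE: "measure (M \<Otimes>\<^sub>M P) E = (\<integral>t. h t \<partial>M)" unfolding h_def by (rule measure_pair_int[OF E])
  have secE: "Pair t -` E \<subseteq> space P" if "t \<in> space M" for t using ES by (auto simp: space_pair_measure)
  have bm_int: "integrable M (\<lambda>t. h t * measure P (Pair t -` Z))" if Z: "Z \<in> sets (M \<Otimes>\<^sub>M P)" for Z
  proof (rule M.integrable_const_bound[where B=1])
    show "AE t in M. norm (h t * measure P (Pair t -` Z)) \<le> 1"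
    proof (rule AE_I2)
      fix t
      have "h t * measure P (Pair t -` Z) \<le> 1" by (rule mult_le_one) (use hb in auto)
      then show "norm (h t * measure P (Pair t -` Z)) \<le> 1" using hb[of t] by simp
    qed
    show "(\<lambda>t. h t * measure P (Pair t -` Z)) \<in> borel_measurable M"
      by (intro borel_measurable_times hm measure_Pair_meas[OF Z])
  qed
  have claim: "measure (M \<Otimes>\<^sub>M P) (E \<inter> Z) = (\<integral>t. h t * measure P (Pair t -` Z) \<partial>M)"
    if Z: "Z \<in> sets (M \<Otimes>\<^sub>M P)" for Z
  proof (rule pair_dynkin[OF Z, where Q="\<lambda>Z. measure (M \<Otimes>\<^sub>M P) (E \<inter> Z) = (\<integral>t. h t * measure P (Pair t -` Z) \<partial>M)"])
    fix c d assume c: "c \<in> sets M" and d: "d \<in> sets P"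
    have cO: "c \<times> space P \<in> sets (M \<Otimes>\<^sub>M P)" using c by auto
    have "measure (M \<Otimes>\<^sub>M P) (E \<inter> (c \<times> space P)) = (\<integral>t. measure P (Pair t -` (E \<inter> (c \<times> space P))) \<partial>M)"
      by (rule measure_pair_int) (use E cO in auto)
    also have "\<dots> = (\<integral>t. indicator c t * h t \<partial>M)"
    proof (rule Bochner_Integration.integral_cong[OF refl])
      fix t assume t: "t \<in> space M"
      have e: "Pair t -` (E \<inter> (c \<times> space P)) = (if t \<in> c then Pair t -` E else {})"
        using secE[OF t] by auto
      show "measure P (Pair t -` (E \<inter> (c \<times> space P))) = indicator c t * h t"
        unfolding e by (simp add: h_def indicator_def)
    qed
    finally have l: "measure (M \<Otimes>\<^sub>M P) (E \<inter> (c \<times> space P)) = (\<integral>t. indicator c t * h t \<partial>M)" .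
    have r: "(\<integral>t. h t * measure P (Pair t -` (c \<times> d)) \<partial>M) = measure P d * (\<integral>t. indicator c t * h t \<partial>M)"
    proof -
      have "(\<integral>t. h t * measure P (Pair t -` (c \<times> d)) \<partial>M) = (\<integral>t. measure P d * (indicator c t * h t) \<partial>M)"
      proof (rule Bochner_Integration.integral_cong[OF refl])
        fix t
        have e: "Pair t -` (c \<times> d) = (if t \<in> c then d else {})" by auto
        show "h t * measure P (Pair t -` (c \<times> d)) = measure P d * (indicator c t * h t)"
          unfolding e by (simp add: indicator_def)
      qed
      also have "\<dots> = measure P d * (\<integral>t. indicator c t * h t \<partial>M)" by simp
      finally show ?thesis .
    qed
    show "measure (M \<Otimes>\<^sub>M P) (E \<inter> (c \<times> d)) = (\<integral>t. h t * measure P (Pair t -` (c \<times> d)) \<partial>M)"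
      using rectEq[OF c d] l r by simp
  next
    show "measure (M \<Otimes>\<^sub>M P) (E \<inter> {}) = (\<integral>t. h t * measure P (Pair t -` {}) \<partial>M)" by simp
  next
    fix A assume A: "A \<in> sets (M \<Otimes>\<^sub>M P)"
      and IH: "measure (M \<Otimes>\<^sub>M P) (E \<inter> A) = (\<integral>t. h t * measure P (Pair t -` A) \<partial>M)"
    have L: "measure (M \<Otimes>\<^sub>M P) (E \<inter> (space (M \<Otimes>\<^sub>M P) - A)) = measure (M \<Otimes>\<^sub>M P) E - measure (M \<Otimes>\<^sub>M P) (E \<inter> A)"
    proof -
      have e: "E \<inter> (space (M \<Otimes>\<^sub>M P) - A) = E - (E \<inter> A)" using ES by auto
      have "measure (M \<Otimes>\<^sub>M P) (E - (E \<inter> A)) = measure (M \<Otimes>\<^sub>M P) E - measure (M \<Otimes>\<^sub>M P) (E \<inter> A)"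
        by (rule MP.finite_measure_Diff) (use E A in auto)
      then show ?thesis unfolding e .
    qed
    have R: "(\<integral>t. h t * measure P (Pair t -` (space (M \<Otimes>\<^sub>M P) - A)) \<partial>M) = (\<integral>t. h t \<partial>M) - (\<integral>t. h t * measure P (Pair t -` A) \<partial>M)"
    proof -
      have "(\<integral>t. h t * measure P (Pair t -` (space (M \<Otimes>\<^sub>M P) - A)) \<partial>M) = (\<integral>t. h t - h t * measure P (Pair t -` A) \<partial>M)"
      proof (rule Bochner_Integration.integral_cong[OF refl])
        fix t assume t: "t \<in> space M"
        have e: "Pair t -` (space (M \<Otimes>\<^sub>M P) - A) = space P - Pair t -` A"
          using t by (auto simp: space_pair_measure)
        have cm: "measure P (space P - Pair t -` A) = 1 - measure P (Pair t -` A)"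
          by (rule prob_compl) (rule sets_Pair1[OF A])
        show "h t * measure P (Pair t -` (space (M \<Otimes>\<^sub>M P) - A)) = h t - h t * measure P (Pair t -` A)"
          unfolding e cm by (simp add: algebra_simps)
      qed
      also have "\<dots> = (\<integral>t. h t \<partial>M) - (\<integral>t. h t * measure P (Pair t -` A) \<partial>M)"
        by (rule Bochner_Integration.integral_diff[OF hint bm_int[OF A]])
      finally show ?thesis .
    qed
    show "measure (M \<Otimes>\<^sub>M P) (E \<inter> (space (M \<Otimes>\<^sub>M P) - A)) = (\<integral>t. h t * measure P (Pair t -` (space (M \<Otimes>\<^sub>M P) - A)) \<partial>M)"
      using L R IH mE by simp
  next
    fix A :: "nat \<Rightarrow> _" assume dA: "disjoint_family A" and rA: "range A \<subseteq> sets (M \<Otimes>\<^sub>M P)"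
      and IH: "\<And>i. measure (M \<Otimes>\<^sub>M P) (E \<inter> A i) = (\<integral>t. h t * measure P (Pair t -` A i) \<partial>M)"
    have AS: "A i \<in> sets (M \<Otimes>\<^sub>M P)" for i using rA by auto
    have dis: "A i \<inter> A j = {}" if "i \<noteq> j" for i j using dA that by (simp add: disjoint_family_on_def)
    have l: "(\<lambda>i. measure (M \<Otimes>\<^sub>M P) (E \<inter> A i)) sums measure (M \<Otimes>\<^sub>M P) (E \<inter> \<Union> (range A))"
    proof -
      have "disjoint_family (\<lambda>i. E \<inter> A i)"
        unfolding disjoint_family_on_def
      proof (intro ballI impI)
        fix i j :: nat assume "i \<noteq> j"
        then show "(E \<inter> A i) \<inter> (E \<inter> A j) = {}" using dis[of i j] by auto
      qed
      then have "(\<lambda>i. measure (M \<Otimes>\<^sub>M P) (E \<inter> A i)) sums measure (M \<Otimes>\<^sub>M P) (\<Union> (range (\<lambda>i. E \<inter> A i)))"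
        by (intro MP.finite_measure_UNION) (use E AS in auto)
      moreover have "\<Union> (range (\<lambda>i. E \<inter> A i)) = E \<inter> \<Union> (range A)" by auto
      ultimately show ?thesis by simp
    qed
    have ptw: "(\<lambda>i. measure P (Pair t -` A i)) sums measure P (Pair t -` \<Union> (range A))" for t
    proof -
      have "disjoint_family (\<lambda>i. Pair t -` A i)"
        unfolding disjoint_family_on_def
      proof (intro ballI impI)
        fix i j :: nat assume "i \<noteq> j"
        then show "Pair t -` A i \<inter> Pair t -` A j = {}" using dis[of i j] by auto
      qed
      moreover have "range (\<lambda>i. Pair t -` A i) \<subseteq> sets P" using sets_Pair1[OF AS] by auto
      ultimately have "(\<lambda>i. measure P (Pair t -` A i)) sums measure P (\<Union> (range (\<lambda>i. Pair t -` A i)))"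
        using finite_measure_UNION by blast
      moreover have "\<Union> (range (\<lambda>i. Pair t -` A i)) = Pair t -` \<Union> (range A)" by auto
      ultimately show ?thesis by simp
    qed
    have psb: "(\<Sum>i<N. measure P (Pair t -` A i)) \<le> 1" for N :: nat and t
    proof -
      have "(\<Sum>i<N. measure P (Pair t -` A i)) \<le> (\<Sum>i. measure P (Pair t -` A i))"
        by (rule sum_le_suminf[OF sums_summable[OF ptw]]) auto
      also have "\<dots> = measure P (Pair t -` \<Union> (range A))" using sums_unique[OF ptw] by simp
      also have "\<dots> \<le> 1" by simp
      finally show ?thesis .
    qed
    have psb0: "0 \<le> (\<Sum>i<N. measure P (Pair t -` A i))" for N :: nat and t by (simp add: sum_nonneg)
    have ps: "(\<Sum>i<N. (\<integral>t. h t * measure P (Pair t -` A i) \<partial>M)) = (\<integral>t. h t * (\<Sum>i<N. measure P (Pair t -` A i)) \<partial>M)" for N :: nat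
    proof -
      have "(\<integral>t. h t * (\<Sum>i<N. measure P (Pair t -` A i)) \<partial>M) = (\<integral>t. (\<Sum>i<N. h t * measure P (Pair t -` A i)) \<partial>M)"
        by (simp add: sum_distrib_left)
      also have "\<dots> = (\<Sum>i<N. (\<integral>t. h t * measure P (Pair t -` A i) \<partial>M))"
        by (rule Bochner_Integration.integral_sum) (rule bm_int[OF AS])
      finally show ?thesis by simp
    qed
    have r: "(\<lambda>N. \<integral>t. h t * (\<Sum>i<N. measure P (Pair t -` A i)) \<partial>M) \<longlonglongrightarrow> (\<integral>t. h t * measure P (Pair t -` \<Union> (range A)) \<partial>M)"
    proof (rule integral_dominated_convergence[where w="\<lambda>_. 1"])
      show "AE t in M. (\<lambda>N. h t * (\<Sum>i<N. measure P (Pair t -` A i))) \<longlonglongrightarrow> h t * measure P (Pair t -` \<Union> (range A))"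
      proof (rule AE_I2)
        fix t
        show "(\<lambda>N. h t * (\<Sum>i<N. measure P (Pair t -` A i))) \<longlonglongrightarrow> h t * measure P (Pair t -` \<Union> (range A))"
          using ptw[of t] unfolding sums_def by (rule tendsto_mult_left)
      qed
      show "AE t in M. norm (h t * (\<Sum>i<N. measure P (Pair t -` A i))) \<le> 1" for N :: nat
      proof (rule AE_I2)
        fix t
        have "h t * (\<Sum>i<N. measure P (Pair t -` A i)) \<le> 1"
          by (rule mult_le_one) (use hb psb psb0 in auto)
        then show "norm (h t * (\<Sum>i<N. measure P (Pair t -` A i))) \<le> 1"
          using hb[of t] psb0 by simp
      qed
      show "(\<lambda>t. h t * (\<Sum>i<N. measure P (Pair t -` A i))) \<in> borel_measurable M" for N :: nat
        by (intro borel_measurable_times hm borel_measurable_sum measure_Pair_meas AS)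
      show "(\<lambda>t. h t * measure P (Pair t -` \<Union> (range A))) \<in> borel_measurable M"
        using rA by (intro borel_measurable_times hm measure_Pair_meas) auto
    qed simp
    have "(\<lambda>i. \<integral>t. h t * measure P (Pair t -` A i) \<partial>M) sums (\<integral>t. h t * measure P (Pair t -` \<Union> (range A)) \<partial>M)"
      unfolding sums_def ps by (rule r)
    then have "(\<lambda>i. measure (M \<Otimes>\<^sub>M P) (E \<inter> A i)) sums (\<integral>t. h t * measure P (Pair t -` \<Union> (range A)) \<partial>M)"
      by (simp add: IH)
    then show "measure (M \<Otimes>\<^sub>M P) (E \<inter> \<Union> (range A)) = (\<integral>t. h t * measure P (Pair t -` \<Union> (range A)) \<partial>M)"
      by (rule sums_unique2[OF l])
  qed
  have "measure (M \<Otimes>\<^sub>M P) E = (\<integral>t. h t * h t \<partial>M)"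
    using claim[OF E] by (simp add: h_def[symmetric])
  then have "(\<integral>t. h t - h t * h t \<partial>M) = 0"
    using mE Bochner_Integration.integral_diff[OF hint bm_int[OF E]] by (simp add: h_def[symmetric])
  moreover have "integrable M (\<lambda>t. h t - h t * h t)"
    using hint bm_int[OF E] by (simp add: h_def[symmetric])
  moreover have "AE t in M. 0 \<le> h t - h t * h t"
  proof (rule AE_I2)
    fix t
    have "h t * h t \<le> h t * 1" using hb[of t] by (intro mult_left_mono) auto
    then show "0 \<le> h t - h t * h t" by simp
  qed
  ultimately have "AE t in M. h t - h t * h t = 0"
    by (simp add: integral_nonneg_eq_0_iff_AE)
  then have AE01: "AE t in M. h t = 0 \<or> h t = 1"
  proof eventually_elim
    case (elim t)
    then have "h t * (1 - h t) = 0" by (simp add: algebra_simps)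
    then show ?case by simp
  qed
  have hinv: "h (\<tau> t) = h t" if t: "t \<in> space M" for t
  proof -
    have e1: "Pair t -` E = shift (W (\<kappa> t)) -` (Pair (\<tau> t) -` E) \<inter> space P"
    proof -
      have "Pair t -` E = Pair t -` (S -` E \<inter> space (M \<Otimes>\<^sub>M P))" using inv by simp
      also have "\<dots> = shift (W (\<kappa> t)) -` (Pair (\<tau> t) -` E) \<inter> space P"
        using t by (auto simp: skew_def theta_eq space_pair_measure)
      finally show ?thesis .
    qed
    show ?thesis unfolding h_def e1 by (rule shift_measure[OF sets_Pair1[OF E], symmetric])
  qed
  define H where "H = h -` {1} \<inter> space M"
  have HM: "H \<in> sets M" unfolding H_def by (rule measurable_sets[OF hm]) simp
  have Hinv: "\<tau> -` H \<inter> space M = H"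
    using hinv measurable_space[OF \<tau>_meas] unfolding H_def by auto
  have ergM: "\<forall>A\<in>sets M. \<tau> -` A \<inter> space M = A \<longrightarrow> measure M A = 0 \<or> measure M A = 1"
    using erg unfolding ergodic_def by (rule conjunct2)
  have "measure M H = 0 \<or> measure M H = 1" using ergM HM Hinv by simp
  moreover have "measure (M \<Otimes>\<^sub>M P) E = measure M H"
  proof -
    have "(\<integral>t. h t \<partial>M) = (\<integral>t. indicator H t \<partial>M)"
    proof (rule integral_cong_AE)
      show "AE t in M. h t = indicator H t"
        using AE01 AE_space by eventually_elim (auto simp: H_def indicator_def)
    qed (use hm HM in auto)
    also have "\<dots> = measure M H"
      using HM by (simp add: Int_absorb2 sets.sets_into_space)
    finally show ?thesis using mE by simp
  qed
  ultimately show "measure (M \<Otimes>\<^sub>M P) E = 0 \<or> measure (M \<Otimes>\<^sub>M P) E = 1" by simp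
qed

end

theorem corollary2p3:
  fixes Y :: "'u measure"
    and P :: "((int ^ 'd) \<Rightarrow> 'u) measure"
    and M :: "'a measure"
    and \<tau> :: "'a \<Rightarrow> 'a"
    and \<kappa> :: "'a \<Rightarrow> int \<times> int"
    and v1 v2 :: "int ^ 'd"
  assumes d2: "CARD('d) \<ge> 2"
    and P_sets: "sets P = sets (config_space Y :: ((int ^ 'd) \<Rightarrow> 'u) measure)"
    and P_prob: "prob_space P"
    and P_shift: "\<forall>v :: int ^ 'd. mpt P (shift v)"
    and P_tail: "tail_trivial Y P"
    and indep: "lin_indep2 v1 v2"
    and M_prob: "prob_space M"
    and \<tau>_mpt: "mpt M \<tau>"
    and \<kappa>_meas: "\<kappa> \<in> measurable M (count_space UNIV)"
    and transient: "AE t in M. filterlim (\<lambda>n. maxnorm2 (cocycle_sum \<tau> \<kappa> n t)) at_top sequentially"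
  shows "(ergodic M \<tau> \<longrightarrow> ergodic (M \<Otimes>\<^sub>M P) (skew v1 v2 \<tau> \<kappa>))
       \<and> (weakly_mixing M \<tau> \<longrightarrow> weakly_mixing (M \<Otimes>\<^sub>M P) (skew v1 v2 \<tau> \<kappa>))
       \<and> (strongly_mixing M \<tau> \<longrightarrow> strongly_mixing (M \<Otimes>\<^sub>M P) (skew v1 v2 \<tau> \<kappa>))"
proof -
  have ts: "tailset Y P"
    by (rule tailset.intro) (use P_sets P_prob P_shift P_tail in simp_all)
  have ss: "skewset Y P M \<tau> \<kappa> v1 v2"
    by (rule skewset.intro[OF ts skewset_axioms.intro]) (use M_prob \<tau>_mpt \<kappa>_meas indep transient in simp_all)
  show ?thesis
    using skewset.ergodic_part[OF ss] skewset.weak_part[OF ss] skewset.strong_part[OF ss] by blast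
qed

end
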